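(* Let $E$ be a subfield of $\mathbb{C}$ and let $F(x_1,\ldots,x_m)\in E[[x_1,\ldots,x_m]]$ be D-finite. Suppose there exist positive constants $C_1,C_2$ such that for all $(\alpha_1,\ldots,\alpha_m)\in\mathbb{T}^m$ and all $n\ge 1$, the coefficient of $t^n$ in $F(\alpha_1 t,\ldots,\alpha_m t)$ has modulus at most $C_1 n^{C_2}$. Then there exists a nonzero polynomial $W(x_1,\ldots,x_m,t)\in E[x_1,\ldots,x_m,t]$ such that whenever $(\alpha_1,\ldots,\alpha_m)\in\mathbb{T}^m$ is such that $F(\alpha_1 t,\ldots,\alpha_m t)$ is a rational function, the series $W(\alpha_1,\ldots,\alpha_m,t)F(\alpha_1 t,\ldots,\alpha_m t)$ has radius of convergence strictly greater than $1$.
   Context: $\mathbb{T}$ denotes the unit circle in $\mathbb{C}$. D-finite means all partial derivatives of $F$ span a finite-dimensional vector space over $E(x_1,\ldots,x_m)$. *)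

theory Defs
  imports "HOL-Analysis.Analysis" "HOL-Computational_Algebra.Polynomial"
    "HOL-Computational_Algebra.Formal_Power_Series"
begin

definition subfield_C :: "complex set \<Rightarrow> bool" where
  "subfield_C E \<longleftrightarrow> 0 \<in> E \<and> 1 \<in> E \<and>
     (\<forall>x\<in>E. \<forall>y\<in>E. x + y \<in> E \<and> x * y \<in> E) \<and>
     (\<forall>x\<in>E. - x \<in> E \<and> inverse x \<in> E)"

text \<open>Multi-indices in m variables x_0,...,x_(m-1): exponent vectors supported in {..<m}.
  A multivariate formal power series is a coefficient function on multi-indices
  (only values on mons m matter).\<close>
definition mons :: "nat \<Rightarrow> (nat \<Rightarrow> nat) set" where
  "mons m = {a. \<forall>i\<ge>m. a i = 0}"

definition mseries_over :: "nat \<Rightarrow> complex set \<Rightarrow> ((nat \<Rightarrow> nat) \<Rightarrow> complex) \<Rightarrow> bool" where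
  "mseries_over m E F \<longleftrightarrow> (\<forall>a\<in>mons m. F a \<in> E)"

definition mpoly_over :: "nat \<Rightarrow> complex set \<Rightarrow> ((nat \<Rightarrow> nat) \<Rightarrow> complex) \<Rightarrow> bool" where
  "mpoly_over m E P \<longleftrightarrow> (\<forall>a\<in>mons m. P a \<in> E) \<and> finite {a\<in>mons m. P a \<noteq> 0}"

definition ms_mult :: "nat \<Rightarrow> ((nat \<Rightarrow> nat) \<Rightarrow> complex) \<Rightarrow> ((nat \<Rightarrow> nat) \<Rightarrow> complex)
    \<Rightarrow> (nat \<Rightarrow> nat) \<Rightarrow> complex" where
  "ms_mult m f g = (\<lambda>a. \<Sum>b\<in>{b\<in>mons m. \<forall>i. b i \<le> a i}. f b * g (\<lambda>i. a i - b i))"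

text \<open>Iterated partial derivative d^beta F, beta a multi-index:
  coefficient of x^a is  prod_i (a_i+1)...(a_i+beta_i) * F(a+beta).\<close>
definition ms_deriv :: "nat \<Rightarrow> (nat \<Rightarrow> nat) \<Rightarrow> ((nat \<Rightarrow> nat) \<Rightarrow> complex)
    \<Rightarrow> (nat \<Rightarrow> nat) \<Rightarrow> complex" where
  "ms_deriv m \<beta> F = (\<lambda>a. (\<Prod>i<m. pochhammer (of_nat (a i + 1)) (\<beta> i)) * F (\<lambda>i. a i + \<beta> i))"

text \<open>D-finiteness over E: the E(x_1..x_m)-span of all partial derivatives of F is
  finite-dimensional, i.e. there is a finite set B of derivatives such that every derivative
  lies in the E(x)-span of B (denominators cleared by a nonzero polynomial q).\<close>
definition dfinite :: "nat \<Rightarrow> complex set \<Rightarrow> ((nat \<Rightarrow> nat) \<Rightarrow> complex) \<Rightarrow> bool" where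
  "dfinite m E F \<longleftrightarrow> (\<exists>B. finite B \<and> B \<subseteq> mons m \<and>
     (\<forall>\<beta>\<in>mons m. \<exists>q p. mpoly_over m E q \<and> (\<exists>a\<in>mons m. q a \<noteq> 0) \<and>
        (\<forall>\<gamma>\<in>B. mpoly_over m E (p \<gamma>)) \<and>
        (\<forall>a\<in>mons m. ms_mult m q (ms_deriv m \<beta> F) a =
                       (\<Sum>\<gamma>\<in>B. ms_mult m (p \<gamma>) (ms_deriv m \<gamma> F) a))))"

definition diag_coeff :: "nat \<Rightarrow> ((nat \<Rightarrow> nat) \<Rightarrow> complex) \<Rightarrow> (nat \<Rightarrow> complex) \<Rightarrow> nat \<Rightarrow> complex" where
  "diag_coeff m F \<alpha> n = (\<Sum>a\<in>{a\<in>mons m. (\<Sum>i<m. a i) = n}. F a * (\<Prod>i<m. \<alpha> i ^ a i))"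

definition diag_fps :: "nat \<Rightarrow> ((nat \<Rightarrow> nat) \<Rightarrow> complex) \<Rightarrow> (nat \<Rightarrow> complex) \<Rightarrow> complex fps" where
  "diag_fps m F \<alpha> = Abs_fps (diag_coeff m F \<alpha>)"

text \<open>For a polynomial W in m+1 variables (variable index m playing the role of t),
  the univariate polynomial W(alpha_1,...,alpha_m,t) as a power series in t.\<close>
definition spec_fps :: "nat \<Rightarrow> ((nat \<Rightarrow> nat) \<Rightarrow> complex) \<Rightarrow> (nat \<Rightarrow> complex) \<Rightarrow> complex fps" where
  "spec_fps m W \<alpha> = Abs_fps (\<lambda>k. \<Sum>a\<in>{a\<in>mons (Suc m). W a \<noteq> 0 \<and> a m = k}.
                                  W a * (\<Prod>i<m. \<alpha> i ^ a i))"

definition is_rational_fps :: "complex fps \<Rightarrow> bool" where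
  "is_rational_fps g \<longleftrightarrow> (\<exists>p q :: complex poly. q \<noteq> 0 \<and> fps_of_poly q * g = fps_of_poly p)"

definition on_torus :: "nat \<Rightarrow> (nat \<Rightarrow> complex) \<Rightarrow> bool" where
  "on_torus m \<alpha> \<longleftrightarrow> (\<forall>i<m. norm (\<alpha> i) = 1)"

end

theory Submission
  imports Defs "HOL-Complex_Analysis.Complex_Analysis" "HOL-Computational_Algebra.Polynomial_FPS"
    "HOL-Computational_Algebra.Polynomial_Factorial" "HOL-Computational_Algebra.Field_as_Ring"
begin

definition fth :: "complex fps \<Rightarrow> complex fps" where
  "fth h = fps_X * fps_deriv h"

lemma smult_pow_pred:
  fixes w :: "complex poly"
  shows "smult (of_nat n) (w ^ (n - 1)) * w ^ Suc t = smult (of_nat n) (w ^ (n + t))"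
proof (cases n)
  case 0 then show ?thesis by simp
next
  case (Suc n') then show ?thesis by (simp add: power_add mult_ac)
qed

lemma ode_step_poly:
  fixes w u v :: "complex poly" and n t k :: nat
  assumes w: "pderiv w = 1"
  shows "[:0,1:] * (w ^ Suc t * u * pderiv (w ^ n * v) - smult (of_nat (Suc k)) (pderiv (w ^ Suc t * u) * (w ^ n * v)))
     = w ^ (n + t) * ([:0,1:] * (smult (of_nat n) (v * u) + w * pderiv v * u
          - smult (of_nat (Suc k)) (smult (of_nat (Suc t)) (v * u) + w * v * pderiv u)))"
proof -
  have d1: "pderiv (w ^ n * v) = smult (of_nat n) (w ^ (n - 1)) * v + w ^ n * pderiv v"
    by (simp add: pderiv_mult pderiv_power w algebra_simps)
  have d2: "pderiv (w ^ Suc t * u) = smult (of_nat (Suc t)) (w ^ t) * u + w ^ Suc t * pderiv u"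
    by (simp only: pderiv_mult pderiv_power_Suc w) (simp add: algebra_simps)
  have e1: "w ^ Suc t * u * pderiv (w ^ n * v) = w ^ (n + t) * (smult (of_nat n) (v * u) + w * pderiv v * u)"
  proof -
    have "w ^ Suc t * u * pderiv (w ^ n * v) = (smult (of_nat n) (w ^ (n - 1)) * w ^ Suc t) * (v * u)
            + w ^ (n + t) * (w * pderiv v * u)"
      unfolding d1 by (simp add: algebra_simps power_add)
    also have "\<dots> = w ^ (n + t) * (smult (of_nat n) (v * u) + w * pderiv v * u)"
      unfolding smult_pow_pred by (simp add: algebra_simps)
    finally show ?thesis .
  qed
  have e2: "pderiv (w ^ Suc t * u) * (w ^ n * v) = w ^ (n + t) * (smult (of_nat (Suc t)) (v * u) + w * v * pderiv u)"
    unfolding d2 by (simp add: algebra_simps power_add)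
  show ?thesis unfolding e1 e2 by (simp add: algebra_simps)
qed

lemma fth_mult_step:
  fixes q H :: "complex poly" and T :: "complex fps"
  assumes "fps_of_poly q ^ Suc k * T = fps_of_poly H"
  shows "fps_of_poly q ^ Suc (Suc k) * fth T =
     fps_of_poly ([:0,1:] * (q * pderiv H - smult (of_nat (Suc k)) (pderiv q * H)))"
proof -
  let ?Q = "fps_of_poly q"
  have a: "fps_of_poly (q ^ Suc k) * T = fps_of_poly H" using assms by (simp only: fps_of_poly_power)
  have "fps_deriv (fps_of_poly (q ^ Suc k) * T) = fps_deriv (fps_of_poly H)" using a by simp
  hence d: "fps_of_poly (pderiv (q ^ Suc k)) * T + ?Q ^ Suc k * fps_deriv T = fps_of_poly (pderiv H)"
    unfolding fps_of_poly_pderiv fps_of_poly_power by (metis add.commute fps_deriv_mult)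
  have "?Q ^ Suc (Suc k) * fth T = fps_X * ?Q * (?Q ^ Suc k * fps_deriv T)"
    by (simp add: fth_def algebra_simps)
  also have "?Q ^ Suc k * fps_deriv T = fps_of_poly (pderiv H) - fps_of_poly (pderiv (q ^ Suc k)) * T"
    using d by (simp add: algebra_simps)
  also have "fps_of_poly (pderiv (q ^ Suc k)) = fps_const (of_nat (Suc k)) * fps_of_poly (pderiv q) * ?Q ^ k"
    by (simp only: pderiv_power_Suc fps_of_poly_mult fps_of_poly_smult fps_of_poly_power) (simp add: algebra_simps)
  also have "fps_X * ?Q * (fps_of_poly (pderiv H) - fps_const (of_nat (Suc k)) * fps_of_poly (pderiv q) * ?Q ^ k * T)
     = fps_X * (?Q * fps_of_poly (pderiv H) - fps_const (of_nat (Suc k)) * fps_of_poly (pderiv q) * (?Q ^ Suc k * T))"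
    by (simp add: algebra_simps)
  also have "\<dots> = fps_of_poly ([:0,1:] * (q * pderiv H - smult (of_nat (Suc k)) (pderiv q * H)))"
    unfolding assms by (simp add: fps_of_poly_mult fps_of_poly_diff fps_of_poly_smult algebra_simps)
  finally show ?thesis .
qed

lemma ode_hk:
  fixes q p u :: "complex poly" and g :: "complex fps"
  assumes q: "q = [:-\<rho>,1:] ^ Suc t * u" and hq: "fps_of_poly q * g = fps_of_poly p"
    and u: "poly u \<rho> \<noteq> 0" and p: "poly p \<rho> \<noteq> 0" and \<rho>: "\<rho> \<noteq> 0"
  shows "\<exists>v. fps_of_poly q ^ Suc k * (fth ^^ k) g = fps_of_poly ([:-\<rho>,1:] ^ (t * k) * v) \<and> poly v \<rho> \<noteq> 0"
proof (induction k)
  case 0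
  show ?case using hq p by (intro exI[of _ p]) simp
next
  case (Suc k)
  then obtain v where v: "fps_of_poly q ^ Suc k * (fth ^^ k) g = fps_of_poly ([:-\<rho>,1:] ^ (t * k) * v)"
    and v0: "poly v \<rho> \<noteq> 0" by blast
  define w where "w = [:-\<rho>,1:]"
  have w: "pderiv w = 1" unfolding w_def by (simp add: pderiv_pCons)
  define n where "n = t * k"
  define v' where "v' = [:0,1:] * (smult (of_nat n) (v * u) + w * pderiv v * u
          - smult (of_nat (Suc k)) (smult (of_nat (Suc t)) (v * u) + w * v * pderiv u))"
  have "fps_of_poly q ^ Suc (Suc k) * (fth ^^ Suc k) g =
     fps_of_poly ([:0,1:] * (q * pderiv (w ^ n * v) - smult (of_nat (Suc k)) (pderiv q * (w ^ n * v))))"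
    using fth_mult_step[OF v] by (simp add: w_def n_def)
  also have "\<dots> = fps_of_poly (w ^ (n + t) * v')"
    unfolding v'_def using ode_step_poly[OF w, of t u n v k] unfolding q w_def
    by (simp add: mult_ac)
  also have "n + t = t * Suc k" by (simp add: n_def)
  finally have e: "fps_of_poly q ^ Suc (Suc k) * (fth ^^ Suc k) g = fps_of_poly ([:-\<rho>,1:] ^ (t * Suc k) * v')"
    by (simp add: w_def)
  have pw: "poly w \<rho> = 0" by (simp add: w_def)
  have "poly v' \<rho> = \<rho> * (poly v \<rho> * poly u \<rho>) * (of_nat n - of_nat (Suc k) * of_nat (Suc t))"
    unfolding v'_def by (simp add: pw algebra_simps)
  moreover have "(of_nat n :: complex) - of_nat (Suc k) * of_nat (Suc t) \<noteq> 0"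
  proof -
    have "n < Suc k * Suc t" by (simp add: n_def)
    hence "(of_nat n :: complex) \<noteq> of_nat (Suc k) * of_nat (Suc t)" by (metis less_irrefl of_nat_eq_iff of_nat_mult)
    thus ?thesis by simp
  qed
  ultimately have "poly v' \<rho> \<noteq> 0" using \<rho> v0 u by simp
  with e show ?case by blast
qed

lemma ode_root:
  fixes q p :: "complex poly" and g :: "complex fps" and Q :: "nat \<Rightarrow> complex poly"
  assumes hq: "fps_of_poly q * g = fps_of_poly p" and q0: "q \<noteq> 0" and qr: "poly q \<rho> = 0"
    and p: "poly p \<rho> \<noteq> 0" and \<rho>: "\<rho> \<noteq> 0"
    and ode: "(\<Sum>k\<le>r. fps_of_poly (Q k) * (fth ^^ k) g) = 0"
  shows "poly (Q r) \<rho> = 0"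
proof -
  define w where "w = [:-\<rho>,1:]"
  obtain u where qd: "q = w ^ order \<rho> q * u" and u: "\<not> w dvd u"
    using order_decomp[OF q0, of \<rho>] unfolding w_def by blast
  have u0: "poly u \<rho> \<noteq> 0" using u by (simp add: w_def poly_eq_0_iff_dvd)
  have "order \<rho> q \<noteq> 0" using qr q0 order_root by blast
  then obtain t where t: "order \<rho> q = Suc t" using not0_implies_Suc by blast
  have qd': "q = [:-\<rho>,1:] ^ Suc t * u" using qd t by (simp add: w_def)
  have "\<forall>k. \<exists>v. fps_of_poly q ^ Suc k * (fth ^^ k) g = fps_of_poly (w ^ (t * k) * v) \<and> poly v \<rho> \<noteq> 0"
    using ode_hk[OF qd' hq u0 p \<rho>] unfolding w_def by blast
  then obtain v where v: "\<And>k. fps_of_poly q ^ Suc k * (fth ^^ k) g = fps_of_poly (w ^ (t * k) * v k)"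
    and v0: "\<And>k. poly (v k) \<rho> \<noteq> 0" by metis
  have "0 = fps_of_poly q ^ Suc r * (\<Sum>k\<le>r. fps_of_poly (Q k) * (fth ^^ k) g)" using ode by simp
  also have "\<dots> = (\<Sum>k\<le>r. fps_of_poly (Q k) * fps_of_poly q ^ (r - k) * (fps_of_poly q ^ Suc k * (fth ^^ k) g))"
    unfolding sum_distrib_left
  proof (rule sum.cong[OF refl])
    fix k assume "k \<in> {..r}"
    hence "Suc r = (r - k) + Suc k" by simp
    hence "fps_of_poly q ^ Suc r = fps_of_poly q ^ (r - k) * fps_of_poly q ^ Suc k"
      by (metis power_add)
    thus "fps_of_poly q ^ Suc r * (fps_of_poly (Q k) * (fth ^^ k) g) =
        fps_of_poly (Q k) * fps_of_poly q ^ (r - k) * (fps_of_poly q ^ Suc k * (fth ^^ k) g)"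
      by (simp only: mult_ac)
  qed
  also have "\<dots> = fps_of_poly (\<Sum>k\<le>r. Q k * q ^ (r - k) * (w ^ (t * k) * v k))"
    unfolding v by (simp add: fps_of_poly_sum fps_of_poly_mult fps_of_poly_power)
  finally have s0: "(\<Sum>k\<le>r. Q k * q ^ (r - k) * (w ^ (t * k) * v k)) = 0"
    by (metis fps_of_poly_0 fps_of_poly_eq_iff)
  have "(\<Sum>k\<le>r. Q k * q ^ (r - k) * (w ^ (t * k) * v k)) =
        w ^ (t * r) * (\<Sum>k\<le>r. Q k * w ^ (r - k) * u ^ (r - k) * v k)"
    unfolding sum_distrib_left
  proof (rule sum.cong[OF refl])
    fix k assume "k \<in> {..r}"
    hence kr: "k \<le> r" by simp
    obtain j where j: "r = k + j" using kr le_iff_add by blast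
    have e: "Suc t * (r - k) + t * k = t * r + (r - k)" unfolding j by (simp add: algebra_simps)
    have rk: "r - k = j" using j by simp
    have "q ^ (r - k) * w ^ (t * k) = w ^ (Suc t * (r - k) + t * k) * u ^ (r - k)"
      unfolding qd' w_def[symmetric] rk by (simp only: power_mult_distrib power_add power_mult[symmetric] mult_ac)
    also have "\<dots> = w ^ (t * r) * w ^ (r - k) * u ^ (r - k)" unfolding e by (simp add: power_add)
    finally show "Q k * q ^ (r - k) * (w ^ (t * k) * v k) = w ^ (t * r) * (Q k * w ^ (r - k) * u ^ (r - k) * v k)"
      by (simp add: algebra_simps)
  qed
  with s0 have s1: "(\<Sum>k\<le>r. Q k * w ^ (r - k) * u ^ (r - k) * v k) = 0"
    by (simp add: w_def)
  have "poly (\<Sum>k\<le>r. Q k * w ^ (r - k) * u ^ (r - k) * v k) \<rho> = (\<Sum>k\<le>r. if k = r then poly (Q r) \<rho> * poly (v r) \<rho> else 0)"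
    by (rule trans[OF poly_sum sum.cong[OF refl]]) (auto simp: w_def)
  also have "\<dots> = poly (Q r) \<rho> * poly (v r) \<rho>" by simp
  finally show ?thesis using s1 v0[of r] by simp
qed

lemma binom_sums:
  fixes r :: real and k :: nat
  assumes "0 \<le> r" "r < 1"
  shows "(\<lambda>n. real ((n + k) choose k) * r ^ n) sums (1 / (1 - r) ^ Suc k)"
proof -
  have "\<bar>-r\<bar> < 1" using assms by simp
  from gen_binomial_real[OF this, of "- real (Suc k)"]
  have s: "(\<lambda>n. ((- real (Suc k)) gchoose n) * (- r) ^ n) sums (1 + - r) powr (- real (Suc k))" .
  have e: "((- real (Suc k)) gchoose n) * (- r) ^ n = real ((n + k) choose k) * r ^ n" for n
  proof -
    have "((- real (Suc k)) gchoose n) = (-1) ^ n * ((real (k + n)) gchoose n)"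
      by (subst gbinomial_minus) (simp add: algebra_simps)
    also have "(real (k + n) gchoose n) = real ((k + n) choose n)"
      by (simp add: binomial_gbinomial)
    also have "(k + n) choose n = (n + k) choose k"
      by (metis add.commute binomial_symmetric le_add2 add_diff_cancel_right')
    finally have "((- real (Suc k)) gchoose n) = (-1) ^ n * real ((n + k) choose k)" .
    moreover have "(-1) ^ n * (- r) ^ n = r ^ n"
      by (simp flip: power_mult_distrib)
    ultimately show ?thesis by (metis mult.commute mult.left_commute)
  qed
  have "(1 + - r) powr (- real (Suc k)) = inverse ((1 + - r) powr real (Suc k))" by (rule powr_minus)
  also have "(1 + - r) powr real (Suc k) = (1 + - r) ^ Suc k" using assms by (intro powr_realpow) simp
  finally have pe: "(1 + - r) powr (- real (Suc k)) = 1 / (1 - r) ^ Suc k" by (simp add: divide_inverse)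
  from s show ?thesis unfolding pe e .
qed

lemma pow_le_fact_binom: "n ^ k \<le> fact k * ((n + k) choose k)"
proof (induction k)
  case 0 then show ?case by simp
next
  case (Suc k)
  have eq: "Suc (n + k) * ((n + k) choose k) = (Suc (n + k) choose Suc k) * Suc k"
    by (rule Suc_times_binomial_eq)
  have "n ^ Suc k = n * n ^ k" by simp
  also have "\<dots> \<le> Suc (n + k) * (fact k * ((n + k) choose k))"
    using Suc by (intro mult_mono) auto
  also have "\<dots> = fact k * (Suc (n + k) * ((n + k) choose k))" by (simp add: algebra_simps)
  also have "\<dots> = fact (Suc k) * ((n + Suc k) choose Suc k)"
    unfolding eq by (simp add: algebra_simps)
  finally show ?case .
qed

lemma powr_le_fact_binom:
  assumes "n \<ge> 1" "C2 \<le> real k"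
  shows "real n powr C2 \<le> fact k * real ((n + k) choose k)"
proof -
  have "real n powr C2 \<le> real n powr real k"
    using assms by (intro powr_mono) auto
  also have "\<dots> = real (n ^ k)" using assms by (simp add: powr_realpow)
  also have "\<dots> \<le> real (fact k * ((n + k) choose k))"
    by (subst of_nat_le_iff) (rule pow_le_fact_binom)
  finally show ?thesis by simp
qed

lemma growth_bound:
  fixes g :: "complex fps" and z :: complex
  assumes bd: "\<forall>n\<ge>1. norm (g $ n) \<le> C1 * real n powr C2" and C1: "C1 \<ge> 0" and k: "C2 \<le> real k"
    and z: "norm z < 1"
  shows "summable (\<lambda>n. g $ n * z ^ n)"
    and "norm (eval_fps g z) \<le> (norm (g $ 0) + C1 * fact k) / (1 - norm z) ^ Suc k"
proof -
  define r where "r = norm z"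
  have r: "0 \<le> r" "r < 1" using z by (auto simp: r_def)
  define M where "M n = (if n = 0 then norm (g $ 0) else 0) + C1 * fact k * (real ((n + k) choose k) * r ^ n)" for n
  have bs: "(\<lambda>n. real ((n + k) choose k) * r ^ n) sums (1 / (1 - r) ^ Suc k)" by (rule binom_sums[OF r])
  have s0: "(\<lambda>n. if n = 0 then norm (g $ 0) else 0) sums norm (g $ 0)"
    using sums_single[of 0 "\<lambda>_. norm (g $ 0)"] by (simp add: if_distrib cong: if_cong)
  have Ms: "M sums (norm (g $ 0) + C1 * fact k * (1 / (1 - r) ^ Suc k))"
    unfolding M_def by (intro sums_add s0 sums_mult bs)
  have le: "norm (g $ n * z ^ n) \<le> M n" for n
  proof (cases "n = 0")
    case True
    have "0 \<le> C1 * fact k * (real ((0 + k) choose k) * r ^ 0)" using C1 by simp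
    thus ?thesis using True by (simp add: M_def)
  next
    case False
    have "norm (g $ n * z ^ n) = norm (g $ n) * r ^ n" by (simp add: norm_mult norm_power r_def)
    also have "\<dots> \<le> C1 * (fact k * real ((n + k) choose k)) * r ^ n"
    proof (intro mult_right_mono)
      have "norm (g $ n) \<le> C1 * real n powr C2" using bd False by simp
      also have "\<dots> \<le> C1 * (fact k * real ((n + k) choose k))"
        using False k C1 by (intro mult_left_mono powr_le_fact_binom) auto
      finally show "norm (g $ n) \<le> C1 * (fact k * real ((n + k) choose k))" .
    qed (use r in auto)
    also have "\<dots> = M n" using False by (simp add: M_def algebra_simps)
    finally show ?thesis .
  qed
  have sm: "summable M" using Ms by (rule sums_summable)
  show sg: "summable (\<lambda>n. g $ n * z ^ n)"
    by (rule summable_comparison_test[OF _ sm]) (use le in auto)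
  have sn: "summable (\<lambda>n. norm (g $ n * z ^ n))"
    by (rule summable_comparison_test[OF _ sm]) (use le in auto)
  have "norm (eval_fps g z) = norm (\<Sum>n. g $ n * z ^ n)" by (simp add: eval_fps_def)
  also have "\<dots> \<le> (\<Sum>n. norm (g $ n * z ^ n))" by (rule summable_norm[OF sn])
  also have "\<dots> \<le> (\<Sum>n. M n)" by (rule suminf_le[OF le sn sm])
  also have "\<dots> = norm (g $ 0) + C1 * fact k * (1 / (1 - r) ^ Suc k)" using Ms by (rule sums_unique[symmetric])
  also have "\<dots> \<le> (norm (g $ 0) + C1 * fact k) / (1 - r) ^ Suc k"
  proof -
    have "(1 - r) ^ Suc k \<le> 1" using r by (intro power_le_one) auto
    moreover have "(1 - r) ^ Suc k > 0" using r by simp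
    ultimately have "norm (g $ 0) * (1 - r) ^ Suc k \<le> norm (g $ 0) * 1"
      by (intro mult_left_mono) auto
    hence "norm (g $ 0) \<le> norm (g $ 0) / (1 - r) ^ Suc k"
      using \<open>(1 - r) ^ Suc k > 0\<close> by (simp add: le_divide_eq)
    thus ?thesis by (simp add: add_divide_distrib)
  qed
  finally show "norm (eval_fps g z) \<le> (norm (g $ 0) + C1 * fact k) / (1 - norm z) ^ Suc k"
    by (simp add: r_def)
qed

lemma growth_radius:
  fixes g :: "complex fps"
  assumes bd: "\<forall>n\<ge>1. norm (g $ n) \<le> C1 * real n powr C2" and C1: "C1 \<ge> 0"
  shows "fps_conv_radius g \<ge> 1"
  unfolding fps_conv_radius_def
proof (rule conv_radius_geI_ex)
  fix r :: real assume r: "0 < r" "ereal r < 1"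
  have "C2 \<le> real (nat \<lceil>C2\<rceil>)" by linarith
  from growth_bound(1)[OF bd C1 this, of "of_real r"] r
  show "\<exists>z. norm z = r \<and> summable (\<lambda>n. g $ n * z ^ n)"
    by (intro exI[of _ "of_real r"]) auto
qed

lemma eval_rat:
  fixes g :: "complex fps"
  assumes hq: "fps_of_poly q * g = fps_of_poly p" and R: "fps_conv_radius g \<ge> 1" and z: "norm z < 1"
  shows "poly q z * eval_fps g z = poly p z"
proof -
  have "ereal (norm z) < 1" using z by simp
  hence "norm z < fps_conv_radius g" using R by (meson less_le_trans)
  hence "eval_fps (fps_of_poly q * g) z = eval_fps (fps_of_poly q) z * eval_fps g z"
    by (intro eval_fps_mult) auto
  thus ?thesis using hq by simp
qed

lemma coprime_root:
  fixes p q :: "complex poly"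
  assumes "coprime p q" "poly q \<rho> = 0"
  shows "poly p \<rho> \<noteq> 0"
proof
  assume "poly p \<rho> = 0"
  hence "[:-\<rho>,1:] dvd p" "[:-\<rho>,1:] dvd q" using assms by (auto simp: poly_eq_0_iff_dvd)
  hence "is_unit [:-\<rho>,1:]" using assms(1) coprime_common_divisor by blast
  thus False by (simp add: is_unit_iff_degree)
qed

lemma root_norm_ge:
  fixes g :: "complex fps"
  assumes hq: "fps_of_poly q * g = fps_of_poly p" and R: "fps_conv_radius g \<ge> 1"
    and cp: "coprime p q" and r: "poly q \<rho> = 0"
  shows "norm \<rho> \<ge> 1"
proof (rule ccontr)
  assume "\<not> norm \<rho> \<ge> 1"
  hence "norm \<rho> < 1" by simp
  from eval_rat[OF hq R this] r have "poly p \<rho> = 0" by simp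
  with coprime_root[OF cp r] show False by simp
qed

lemma order_bound:
  fixes g :: "complex fps"
  assumes bd: "\<forall>n\<ge>1. norm (g $ n) \<le> C1 * real n powr C2" and C1: "C1 \<ge> 0" and k: "C2 \<le> real k"
    and hq: "fps_of_poly q * g = fps_of_poly p" and cp: "coprime p q" and q0: "q \<noteq> 0"
    and r: "poly q \<rho> = 0" and n1: "norm \<rho> = 1"
  shows "order \<rho> q \<le> Suc k"
proof (rule ccontr)
  assume "\<not> order \<rho> q \<le> Suc k"
  hence "Suc (Suc k) \<le> order \<rho> q" by simp
  then obtain j where sj: "order \<rho> q = Suc (Suc k) + j" using le_Suc_ex by blast
  define w where "w = [:-\<rho>,1:]"
  obtain u where qd0: "q = w ^ order \<rho> q * u"
    using order_decomp[OF q0, of \<rho>] unfolding w_def by blast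
  define s where "s = Suc (Suc k) + j"
  have qd: "q = w ^ s * u" using qd0 sj s_def by simp
  have R: "fps_conv_radius g \<ge> 1" by (rule growth_radius[OF bd C1])
  define A where "A = norm (g $ 0) + C1 * fact k"
  have A0: "A \<ge> 0" using C1 by (simp add: A_def)
  have p0: "poly p \<rho> \<noteq> 0" by (rule coprime_root[OF cp r])
  have le: "norm (poly p (of_real t * \<rho>)) \<le> A * (1 - t) * norm (poly u (of_real t * \<rho>))"
    if t: "t \<in> {0<..<1}" for t :: real
  proof -
    define z where "z = of_real t * \<rho>"
    have nz: "norm z = t" using t n1 by (simp add: z_def norm_mult)
    have nzr: "norm (z - \<rho>) = 1 - t"
    proof -
      have "z - \<rho> = of_real (t - 1) * \<rho>" by (simp add: z_def algebra_simps)
      hence "norm (z - \<rho>) = \<bar>t - 1\<bar>" using n1 by (simp only: norm_mult norm_of_real) simp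
      thus ?thesis using t by simp
    qed
    have "poly p z = poly q z * eval_fps g z" using eval_rat[OF hq R] nz t by simp
    moreover have "poly q z = (z - \<rho>) ^ s * poly u z" by (simp add: qd w_def poly_power)
    ultimately have "norm (poly p z) = norm (z - \<rho>) ^ s * norm (poly u z) * norm (eval_fps g z)"
      by (simp add: norm_mult norm_power)
    hence "norm (poly p z) = (1 - t) ^ (Suc (Suc k) + j) * norm (poly u z) * norm (eval_fps g z)"
      by (simp only: nzr s_def)
    also have "\<dots> \<le> (1 - t) ^ (Suc (Suc k) + j) * norm (poly u z) * (A / (1 - t) ^ Suc k)"
      using growth_bound(2)[OF bd C1 k, of z] nz t by (intro mult_left_mono) (auto simp: A_def)
    also have "\<dots> = A * ((1 - t) * (1 - t) ^ j) * norm (poly u z)"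
      using t by (simp add: power_add field_simps)
    also have "\<dots> \<le> A * (1 - t) * norm (poly u z)"
    proof -
      have "(1 - t) ^ j \<le> 1" using t by (intro power_le_one) auto
      hence "(1 - t) * (1 - t) ^ j \<le> (1 - t)" using t by (simp add: mult_le_cancel_left1)
      thus ?thesis using A0 by (intro mult_right_mono mult_left_mono) auto
    qed
    finally show ?thesis by (simp add: z_def)
  qed
  have ev: "eventually (\<lambda>t. norm (poly p (of_real t * \<rho>)) \<le> A * (1 - t) * norm (poly u (of_real t * \<rho>))) (at_left (1::real))"
  proof -
    have "eventually (\<lambda>x. x \<in> {0<..<1}) (at_left (1::real))" by (rule eventually_at_left_real) simp
    thus ?thesis by (rule eventually_mono) (rule le)
  qed
  have l1: "((\<lambda>t. norm (poly p (of_real t * \<rho>))) \<longlongrightarrow> norm (poly p (of_real 1 * \<rho>))) (at_left (1::real))"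
    by (intro tendsto_intros)
  have l2: "((\<lambda>t. A * (1 - t) * norm (poly u (of_real t * \<rho>))) \<longlongrightarrow> A * (1 - 1) * norm (poly u (of_real 1 * \<rho>))) (at_left (1::real))"
    by (intro tendsto_intros)
  have "norm (poly p (of_real 1 * \<rho>)) \<le> A * (1 - 1) * norm (poly u (of_real 1 * \<rho>))"
    by (rule tendsto_le[OF trivial_limit_at_left_real l2 l1 ev])
  hence "poly p \<rho> = 0" by simp
  with p0 show False by simp
qed

lemma decomp:
  fixes q M :: "complex poly"
  assumes "q \<noteq> 0" "M \<noteq> 0" "\<forall>\<rho>. poly q \<rho> = 0 \<and> norm \<rho> \<le> 1 \<longrightarrow> order \<rho> q \<le> order \<rho> M"
  shows "\<exists>d e M2. q = d * e \<and> M = d * M2 \<and> (\<forall>\<rho>. poly e \<rho> = 0 \<longrightarrow> norm \<rho> > 1)"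
  using assms
proof (induction "degree q" arbitrary: q M rule: less_induct)
  case (less q M)
  show ?case
  proof (cases "\<forall>\<rho>. poly q \<rho> = 0 \<longrightarrow> norm \<rho> > 1")
    case True
    thus ?thesis by (intro exI[of _ 1] exI[of _ q] exI[of _ M]) simp
  next
    case False
    then obtain \<rho> where r: "poly q \<rho> = 0" "norm \<rho> \<le> 1" by (auto simp: not_less)
    define w where "w = [:-\<rho>,1:]"
    have "order \<rho> q \<noteq> 0" using r less.prems(1) order_root by blast
    hence "order \<rho> M \<noteq> 0" using less.prems(3) r by fastforce
    hence "poly M \<rho> = 0" using order_root by blast
    then obtain M' where M': "M = w * M'" unfolding w_def by (metis dvdE poly_eq_0_iff_dvd)
    from r obtain q' where q': "q = w * q'" unfolding w_def by (metis dvdE poly_eq_0_iff_dvd)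
    have w0: "w \<noteq> 0" by (simp add: w_def)
    have q'0: "q' \<noteq> 0" and M'0: "M' \<noteq> 0" using less.prems q' M' by auto
    have "degree q = degree w + degree q'" unfolding q' using w0 q'0 by (rule degree_mult_eq)
    hence deg: "degree q' < degree q" by (simp add: w_def)
    have hyp: "\<forall>\<sigma>. poly q' \<sigma> = 0 \<and> norm \<sigma> \<le> 1 \<longrightarrow> order \<sigma> q' \<le> order \<sigma> M'"
    proof (intro allI impI)
      fix \<sigma> assume s: "poly q' \<sigma> = 0 \<and> norm \<sigma> \<le> 1"
      hence "poly q \<sigma> = 0" using q' by simp
      hence "order \<sigma> q \<le> order \<sigma> M" using less.prems(3) s by blast
      moreover have "order \<sigma> q = order \<sigma> w + order \<sigma> q'" using q' less.prems(1) by (simp add: order_mult)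
      moreover have "order \<sigma> M = order \<sigma> w + order \<sigma> M'" using M' less.prems(2) by (simp add: order_mult)
      ultimately show "order \<sigma> q' \<le> order \<sigma> M'" by simp
    qed
    from less.hyps[OF deg q'0 M'0 hyp] obtain d e M2 where
      de: "q' = d * e" "M' = d * M2" "\<forall>\<rho>. poly e \<rho> = 0 \<longrightarrow> norm \<rho> > 1" by blast
    show ?thesis using de q' M' by (intro exI[of _ "w * d"] exI[of _ e] exI[of _ M2]) (simp add: mult.assoc)
  qed
qed

lemma radius_gt1:
  fixes a e :: "complex poly" and h :: "complex fps"
  assumes he: "fps_of_poly e * h = fps_of_poly a" and e: "\<forall>\<rho>. poly e \<rho> = 0 \<longrightarrow> norm \<rho> > 1"
  shows "conv_radius (fps_nth h) > 1"
proof -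
  have e0: "e \<noteq> 0" using e by (metis norm_zero poly_0 zero_less_one not_less_iff_gr_or_eq)
  have fin: "finite {\<rho>. poly e \<rho> = 0}" using e0 poly_roots_finite by blast
  define R where "R = Min (insert 2 (norm ` {\<rho>. poly e \<rho> = 0}))"
  have R1: "R > 1" unfolding R_def using fin e by (subst Min_gr_iff) auto
  have Rle: "norm \<rho> \<ge> R" if "poly e \<rho> = 0" for \<rho>
    unfolding R_def using fin that by (intro Min_le) auto
  have e00: "fps_of_poly e $ 0 \<noteq> 0"
  proof
    assume "fps_of_poly e $ 0 = 0"
    hence "poly e 0 = 0" by (simp add: poly_0_coeff_0)
    with e show False by auto
  qed
  have "h = inverse (fps_of_poly e) * (fps_of_poly e * h)"
    using inverse_mult_eq_1[OF e00] by (simp flip: mult.assoc)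
  also have "\<dots> = fps_of_poly a / fps_of_poly e"
    unfolding he fps_divide_unit[OF e00] by (simp add: mult.commute)
  finally have hdiv: "h = fps_of_poly a / fps_of_poly e" .
  have pe: "poly c has_fps_expansion fps_of_poly c" for c :: "complex poly"
  proof -
    have "eval_fps (fps_of_poly c) has_fps_expansion fps_of_poly c"
      by (rule eval_fps_has_fps_expansion) simp
    moreover have "eval_fps (fps_of_poly c) = poly c" by (rule ext) simp
    ultimately show ?thesis by simp
  qed
  have exp: "(\<lambda>z. poly a z / poly e z) has_fps_expansion (fps_of_poly a / fps_of_poly e)"
    using e00 by (intro has_fps_expansion_divide' pe)
  have hol: "(\<lambda>z. poly a z / poly e z) holomorphic_on eball 0 (ereal R)"
  proof (intro holomorphic_intros)
    fix z :: complex assume "z \<in> eball 0 (ereal R)"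
    hence "norm z < R" by simp
    thus "poly e z \<noteq> 0" using Rle by force
  qed
  have "fps_conv_radius h \<ge> ereal R"
    unfolding hdiv by (rule holomorphic_on_imp_fps_conv_radius_ge[OF exp hol])
  moreover have "ereal R > 1" using R1 by simp
  ultimately show ?thesis unfolding fps_conv_radius_def by (meson less_le_trans)
qed

lemma partU:
  fixes g :: "complex fps" and q p :: "complex poly" and Q :: "nat \<Rightarrow> complex poly"
  assumes bd: "\<forall>n\<ge>1. norm (g $ n) \<le> C1 * real n powr C2" and C1: "C1 \<ge> 0"
    and q0: "q \<noteq> 0" and hq0: "fps_of_poly q * g = fps_of_poly p"
    and ode: "(\<Sum>k\<le>r. fps_of_poly (Q k) * (fth ^^ k) g) = 0" and Qr: "Q r \<noteq> 0"
  shows "conv_radius (fps_nth (fps_of_poly (Q r) ^ Suc (nat \<lceil>C2\<rceil>) * g)) > 1"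
proof -
  define kk where "kk = nat \<lceil>C2\<rceil>"
  have kk: "C2 \<le> real kk" unfolding kk_def by linarith
  define d where "d = gcd p q"
  define q1 where "q1 = q div d"
  define p1 where "p1 = p div d"
  have cp: "coprime p1 q1" unfolding p1_def q1_def d_def using q0 by (intro div_gcd_coprime) simp
  have qd: "q = d * q1" unfolding q1_def d_def by simp
  have pd: "p = d * p1" unfolding p1_def d_def by simp
  have d0: "d \<noteq> 0" using q0 by (simp add: d_def)
  have q10: "q1 \<noteq> 0" using q0 qd by auto
  have "fps_of_poly d * (fps_of_poly q1 * g) = fps_of_poly d * fps_of_poly p1"
    using hq0 unfolding qd pd by (simp add: fps_of_poly_mult mult.assoc)
  hence hq: "fps_of_poly q1 * g = fps_of_poly p1"
    using d0 by (simp add: fps_of_poly_eq_iff[of d 0, simplified])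
  have R: "fps_conv_radius g \<ge> 1" by (rule growth_radius[OF bd C1])
  define M where "M = Q r ^ Suc kk"
  have M0: "M \<noteq> 0" using Qr by (simp add: M_def)
  have hyp: "\<forall>\<rho>. poly q1 \<rho> = 0 \<and> norm \<rho> \<le> 1 \<longrightarrow> order \<rho> q1 \<le> order \<rho> M"
  proof (intro allI impI)
    fix \<rho> assume a: "poly q1 \<rho> = 0 \<and> norm \<rho> \<le> 1"
    have "norm \<rho> \<ge> 1" using root_norm_ge[OF hq R cp] a by blast
    hence n1: "norm \<rho> = 1" using a by simp
    have o: "order \<rho> q1 \<le> Suc kk" by (rule order_bound[OF bd C1 kk hq cp q10]) (use a n1 in auto)
    have \<rho>0: "\<rho> \<noteq> 0" using n1 by auto
    have p0: "poly p1 \<rho> \<noteq> 0" using coprime_root[OF cp] a by blast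
    have "poly (Q r) \<rho> = 0" by (rule ode_root[OF hq q10 _ p0 \<rho>0 ode]) (use a in auto)
    hence "[:-\<rho>,1:] dvd Q r" by (simp add: poly_eq_0_iff_dvd)
    hence "[:-\<rho>,1:] ^ Suc kk dvd M" unfolding M_def by (rule dvd_power_same)
    hence "Suc kk \<le> order \<rho> M" using M0 order_divides by blast
    thus "order \<rho> q1 \<le> order \<rho> M" using o by simp
  qed
  obtain d' e M2 where de: "q1 = d' * e" "M = d' * M2" "\<forall>\<rho>. poly e \<rho> = 0 \<longrightarrow> norm \<rho> > 1"
    using decomp[OF q10 M0 hyp] by blast
  have "fps_of_poly e * (fps_of_poly M * g) = fps_of_poly M2 * (fps_of_poly q1 * g)"
    unfolding de by (simp add: fps_of_poly_mult algebra_simps)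
  also have "\<dots> = fps_of_poly (M2 * p1)" by (simp add: hq fps_of_poly_mult)
  finally have "conv_radius (fps_nth (fps_of_poly M * g)) > 1"
    by (rule radius_gt1) (use de in auto)
  thus ?thesis unfolding M_def kk_def fps_of_poly_power .
qed

definition lset :: "nat \<Rightarrow> (nat \<Rightarrow> nat) \<Rightarrow> (nat \<Rightarrow> nat) set" where
  "lset m a = {b\<in>mons m. \<forall>i. b i \<le> a i}"

definition mm :: "nat \<Rightarrow> ((nat \<Rightarrow> nat) \<Rightarrow> complex) \<Rightarrow> ((nat \<Rightarrow> nat) \<Rightarrow> complex) \<Rightarrow> (nat \<Rightarrow> nat) \<Rightarrow> complex" where
  "mm m P f = (\<lambda>a. if a \<in> mons m then ms_mult m P f a else 0)"

lemma ms_mult_lset: "ms_mult m P f a = (\<Sum>b\<in>lset m a. P b * f (\<lambda>i. a i - b i))"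
  by (simp add: ms_mult_def lset_def)

lemma mm_apply: "a \<in> mons m \<Longrightarrow> mm m P f a = (\<Sum>b\<in>lset m a. P b * f (\<lambda>i. a i - b i))"
  by (simp add: mm_def ms_mult_lset)

lemma mm_out: "a \<notin> mons m \<Longrightarrow> mm m P f a = 0"
  by (simp add: mm_def)

lemma mons_iff: "a \<in> mons m \<longleftrightarrow> (\<forall>i\<ge>m. a i = 0)"
  by (simp add: mons_def)

lemma finite_box: "finite {b :: nat \<Rightarrow> nat. (\<forall>i. b i \<le> a i) \<and> (\<forall>i\<ge>m. b i = 0)}"
proof -
  let ?S = "{b :: nat \<Rightarrow> nat. (\<forall>i. b i \<le> a i) \<and> (\<forall>i\<ge>m. b i = 0)}"
  have inj: "inj_on (\<lambda>b. restrict b {..<m}) ?S"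
  proof (rule inj_onI)
    fix b c assume b: "b \<in> ?S" and c: "c \<in> ?S" and e: "restrict b {..<m} = restrict c {..<m}"
    show "b = c"
    proof
      fix i show "b i = c i"
      proof (cases "i < m")
        case True thus ?thesis using fun_cong[OF e, of i] by simp
      next
        case False thus ?thesis using b c by auto
      qed
    qed
  qed
  have "(\<lambda>b. restrict b {..<m}) ` ?S \<subseteq> PiE {..<m} (\<lambda>i. {..a i})"
  proof (rule image_subsetI)
    fix b assume "b \<in> ?S"
    thus "restrict b {..<m} \<in> PiE {..<m} (\<lambda>i. {..a i})" unfolding restrict_PiE_iff by auto
  qed
  hence "finite ((\<lambda>b. restrict b {..<m}) ` ?S)" by (rule finite_subset) (intro finite_PiE; simp)
  thus ?thesis using inj finite_imageD by blast
qed

lemma finite_lset [simp, intro]: "finite (lset m a)"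
  by (rule finite_subset[OF _ finite_box[of a m]]) (auto simp: lset_def mons_def)

lemma lset_diff: "b \<in> lset m a \<Longrightarrow> a \<in> mons m \<Longrightarrow> (\<lambda>i. a i - b i) \<in> mons m"
  by (simp add: lset_def mons_def)

lemma lset_mons: "b \<in> lset m a \<Longrightarrow> b \<in> mons m"
  by (simp add: lset_def)

lemma lset_zero: "a \<in> mons m \<Longrightarrow> (\<lambda>_. 0) \<in> lset m a"
  by (simp add: lset_def mons_def)

lemma mm_cong:
  assumes "\<And>b. b \<in> mons m \<Longrightarrow> P b = P' b" "\<And>b. b \<in> mons m \<Longrightarrow> f b = f' b"
  shows "mm m P f = mm m P' f'"
proof
  fix a show "mm m P f a = mm m P' f' a"
  proof (cases "a \<in> mons m")
    case True
    thus ?thesis unfolding mm_apply[OF True] using assms lset_diff lset_mons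
      by (intro sum.cong) auto
  qed (simp add: mm_out)
qed

lemma mm_comm: "mm m P Q = mm m Q P"
proof
  fix a show "mm m P Q a = mm m Q P a"
  proof (cases "a \<in> mons m")
    case True
    show ?thesis unfolding mm_apply[OF True]
    proof (rule sum.reindex_bij_witness[of _ "\<lambda>b i. a i - b i" "\<lambda>b i. a i - b i"])
      fix b assume "b \<in> lset m a"
      thus "(\<lambda>i. a i - (a i - b i)) = b" by (auto simp: lset_def)
    next
      fix b assume "b \<in> lset m a"
      thus "(\<lambda>i. a i - b i) \<in> lset m a" using True lset_diff by (auto simp: lset_def)
    next
      fix b assume "b \<in> lset m a"
      thus "(\<lambda>i. a i - (a i - b i)) = b" by (auto simp: lset_def)
    next
      fix b assume "b \<in> lset m a"
      thus "(\<lambda>i. a i - b i) \<in> lset m a" using True lset_diff by (auto simp: lset_def)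
    next
      fix b assume b: "b \<in> lset m a"
      have "(\<lambda>i. a i - (a i - b i)) = b" using b by (auto simp: lset_def)
      thus "Q (\<lambda>i. a i - b i) * P (\<lambda>i. a i - (\<lambda>i. a i - b i) i) = P b * Q (\<lambda>i. a i - b i)"
        by simp
    qed
  qed (simp add: mm_out)
qed

lemma mm_assoc: "mm m P (mm m Q f) = mm m (mm m P Q) f"
proof
  fix a show "mm m P (mm m Q f) a = mm m (mm m P Q) f a"
  proof (cases "a \<in> mons m")
    case True
    have "mm m P (mm m Q f) a = (\<Sum>b\<in>lset m a. \<Sum>c\<in>lset m (\<lambda>i. a i - b i). P b * (Q c * f (\<lambda>i. a i - b i - c i)))"
      unfolding mm_apply[OF True] using lset_diff[OF _ True]
      by (intro sum.cong refl) (simp add: mm_apply sum_distrib_left)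
    also have "\<dots> = (\<Sum>(b, c)\<in>Sigma (lset m a) (\<lambda>b. lset m (\<lambda>i. a i - b i)). P b * (Q c * f (\<lambda>i. a i - b i - c i)))"
      by (rule sum.Sigma) auto
    also have "\<dots> = (\<Sum>(d, b)\<in>Sigma (lset m a) (\<lambda>d. lset m d). P b * Q (\<lambda>i. d i - b i) * f (\<lambda>i. a i - d i))"
    proof (rule sum.reindex_bij_witness[of _ "\<lambda>(d, b). (b, \<lambda>i. d i - b i)" "\<lambda>(b, c). (\<lambda>i. b i + c i, b)"])
      fix y assume y: "y \<in> Sigma (lset m a) (\<lambda>b. lset m (\<lambda>i. a i - b i))"
      obtain b c where [simp]: "y = (b, c)" by (cases y)
      from y show "(case case y of (b, c) \<Rightarrow> (\<lambda>i. b i + c i, b) of (d, b) \<Rightarrow> (b, \<lambda>i. d i - b i)) = y"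
        by auto
    next
      fix y assume y: "y \<in> Sigma (lset m a) (\<lambda>b. lset m (\<lambda>i. a i - b i))"
      obtain b c where [simp]: "y = (b, c)" by (cases y)
      from y show "(case y of (b, c) \<Rightarrow> (\<lambda>i. b i + c i, b)) \<in> Sigma (lset m a) (\<lambda>d. lset m d)"
        by (auto simp: lset_def mons_def) (metis le_diff_conv2 add.commute)
    next
      fix x assume x: "x \<in> Sigma (lset m a) (\<lambda>d. lset m d)"
      obtain d b where [simp]: "x = (d, b)" by (cases x)
      from x show "(case case x of (d, b) \<Rightarrow> (b, \<lambda>i. d i - b i) of (b, c) \<Rightarrow> (\<lambda>i. b i + c i, b)) = x"
        by (auto simp: lset_def)
    next
      fix x assume x: "x \<in> Sigma (lset m a) (\<lambda>d. lset m d)"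
      obtain d b where [simp]: "x = (d, b)" by (cases x)
      from x show "(case x of (d, b) \<Rightarrow> (b, \<lambda>i. d i - b i)) \<in> Sigma (lset m a) (\<lambda>b. lset m (\<lambda>i. a i - b i))"
        by (auto simp: lset_def mons_def intro: le_trans diff_le_mono)
    next
      fix y assume y: "y \<in> Sigma (lset m a) (\<lambda>b. lset m (\<lambda>i. a i - b i))"
      obtain b c where [simp]: "y = (b, c)" by (cases y)
      have e1: "(\<lambda>i. b i + c i - b i) = c" by auto
      have e2: "(\<lambda>i. a i - (b i + c i)) = (\<lambda>i. a i - b i - c i)" by auto
      show "(case case y of (b, c) \<Rightarrow> (\<lambda>i. b i + c i, b) of (d, b) \<Rightarrow> P b * Q (\<lambda>i. d i - b i) * f (\<lambda>i. a i - d i)) =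
         (case y of (b, c) \<Rightarrow> P b * (Q c * f (\<lambda>i. a i - b i - c i)))"
        using e1 e2 by simp
    qed
    also have "\<dots> = (\<Sum>d\<in>lset m a. \<Sum>b\<in>lset m d. P b * Q (\<lambda>i. d i - b i) * f (\<lambda>i. a i - d i))"
      by (rule sum.Sigma[symmetric]) auto
    also have "\<dots> = mm m (mm m P Q) f a"
      unfolding mm_apply[OF True] using lset_mons
      by (intro sum.cong refl) (simp add: mm_apply sum_distrib_right)
    finally show ?thesis .
  qed (simp add: mm_out)
qed

lemma mm_add_right: "mm m P (\<lambda>a. f a + g a) = (\<lambda>a. mm m P f a + mm m P g a)"
  by (rule ext) (simp add: mm_def ms_mult_lset sum.distrib algebra_simps)

lemma mm_add_left: "mm m (\<lambda>a. P a + Q a) f = (\<lambda>a. mm m P f a + mm m Q f a)"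
  by (rule ext) (simp add: mm_def ms_mult_lset sum.distrib algebra_simps)

lemma mm_diff_right: "mm m P (\<lambda>a. f a - g a) = (\<lambda>a. mm m P f a - mm m P g a)"
  by (rule ext) (simp add: mm_def ms_mult_lset sum_subtractf algebra_simps)

lemma mm_diff_left: "mm m (\<lambda>a. P a - Q a) f = (\<lambda>a. mm m P f a - mm m Q f a)"
  by (rule ext) (simp add: mm_def ms_mult_lset sum_subtractf algebra_simps)

lemma mm_neg_left: "mm m (\<lambda>a. - P a) f = (\<lambda>a. - mm m P f a)"
  by (rule ext) (simp add: mm_def ms_mult_lset sum_negf)

lemma mm_scal_right: "mm m P (\<lambda>a. c * f a) = (\<lambda>a. c * mm m P f a)"
  by (rule ext) (simp add: mm_def ms_mult_lset sum_distrib_left algebra_simps)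

lemma mm_scal_left: "mm m (\<lambda>a. c * P a) f = (\<lambda>a. c * mm m P f a)"
  by (rule ext) (simp add: mm_def ms_mult_lset sum_distrib_left algebra_simps)

lemma mm_sum_right: "mm m P (\<lambda>a. \<Sum>j\<in>J. f j a) = (\<lambda>a. \<Sum>j\<in>J. mm m P (f j) a)"
  by (rule ext) (simp add: mm_def ms_mult_lset sum_distrib_left sum.swap[of _ J])

lemma mm_sum_left: "mm m (\<lambda>a. \<Sum>j\<in>J. P j a) f = (\<lambda>a. \<Sum>j\<in>J. mm m (P j) f a)"
  by (rule ext) (simp add: mm_def ms_mult_lset sum_distrib_right sum.swap[of _ J])

lemma mm_zero_right: "mm m P (\<lambda>_. 0) = (\<lambda>_. 0)"
  by (rule ext) (simp add: mm_def ms_mult_lset)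

lemma mm_zero_left: "mm m (\<lambda>_. 0) f = (\<lambda>_. 0)"
  by (rule ext) (simp add: mm_def ms_mult_lset)

lemma mm_zero_on_left:
  assumes "\<forall>a\<in>mons m. P a = 0" shows "mm m P f = (\<lambda>_. 0)"
proof -
  have "mm m P f = mm m (\<lambda>_. 0) f" by (rule mm_cong) (use assms in auto)
  thus ?thesis by (simp add: mm_zero_left)
qed

definition mone :: "(nat \<Rightarrow> nat) \<Rightarrow> complex" where
  "mone = (\<lambda>a. if a = (\<lambda>_. 0) then 1 else 0)"

definition mmono :: "(nat \<Rightarrow> nat) \<Rightarrow> (nat \<Rightarrow> nat) \<Rightarrow> complex" where
  "mmono \<beta> = (\<lambda>a. if a = \<beta> then 1 else 0)"

lemma mm_one_left: "mm m mone f = (\<lambda>a. if a \<in> mons m then f a else 0)"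
proof
  fix a show "mm m mone f a = (if a \<in> mons m then f a else 0)"
  proof (cases "a \<in> mons m")
    case True
    have "mm m mone f a = (\<Sum>b\<in>lset m a. if b = (\<lambda>_. 0) then f (\<lambda>i. a i - b i) else 0)"
      unfolding mm_apply[OF True] by (intro sum.cong) (auto simp: mone_def)
    also have "\<dots> = f a" using lset_zero[OF True] by (simp add: sum.delta)
    finally show ?thesis using True by simp
  qed (simp add: mm_out)
qed

lemma mm_mono_left:
  assumes "a \<in> mons m"
  shows "mm m (mmono \<beta>) f a = (if \<beta> \<in> lset m a then f (\<lambda>i. a i - \<beta> i) else 0)"
proof -
  have "mm m (mmono \<beta>) f a = (\<Sum>b\<in>lset m a. if b = \<beta> then f (\<lambda>i. a i - b i) else 0)"
    unfolding mm_apply[OF assms] by (intro sum.cong) (auto simp: mmono_def)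
  also have "\<dots> = (if \<beta> \<in> lset m a then f (\<lambda>i. a i - \<beta> i) else 0)" by (simp add: sum.delta)
  finally show ?thesis .
qed

lemma sf_0: "subfield_C E \<Longrightarrow> 0 \<in> E" by (simp add: subfield_C_def)
lemma sf_1: "subfield_C E \<Longrightarrow> 1 \<in> E" by (simp add: subfield_C_def)
lemma sf_add: "subfield_C E \<Longrightarrow> x \<in> E \<Longrightarrow> y \<in> E \<Longrightarrow> x + y \<in> E" by (simp add: subfield_C_def)
lemma sf_mult: "subfield_C E \<Longrightarrow> x \<in> E \<Longrightarrow> y \<in> E \<Longrightarrow> x * y \<in> E" by (simp add: subfield_C_def)
lemma sf_neg: "subfield_C E \<Longrightarrow> x \<in> E \<Longrightarrow> - x \<in> E" by (simp add: subfield_C_def)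
lemma sf_diff: "subfield_C E \<Longrightarrow> x \<in> E \<Longrightarrow> y \<in> E \<Longrightarrow> x - y \<in> E"
  using sf_add[of E x "- y"] sf_neg[of E y] by simp

lemma sf_sum: assumes "subfield_C E" "\<And>j. j \<in> J \<Longrightarrow> f j \<in> E" shows "sum f J \<in> E"
  using assms(2)
proof (induction J rule: infinite_finite_induct)
  case (infinite A) thus ?case using sf_0[OF assms(1)] by simp
next
  case empty thus ?case using sf_0[OF assms(1)] by simp
next
  case (insert x F) thus ?case using sf_add[OF assms(1)] by simp
qed

lemma sf_prod: assumes "subfield_C E" "\<And>j. j \<in> J \<Longrightarrow> f j \<in> E" shows "prod f J \<in> E"
  using assms(2)
proof (induction J rule: infinite_finite_induct)
  case (infinite A) thus ?case using sf_1[OF assms(1)] by simp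
next
  case empty thus ?case using sf_1[OF assms(1)] by simp
next
  case (insert x F) thus ?case using sf_mult[OF assms(1)] by simp
qed

lemma sf_of_nat: "subfield_C E \<Longrightarrow> of_nat n \<in> E"
  by (induction n) (auto simp: sf_0 sf_1 sf_add)

lemma sf_pow: "subfield_C E \<Longrightarrow> x \<in> E \<Longrightarrow> x ^ n \<in> E"
  by (induction n) (auto simp: sf_1 sf_mult)

definition nz :: "nat \<Rightarrow> ((nat \<Rightarrow> nat) \<Rightarrow> complex) \<Rightarrow> bool" where
  "nz m P \<longleftrightarrow> (\<exists>a\<in>mons m. P a \<noteq> 0)"

lemma mm_vals:
  assumes E: "subfield_C E" and P: "\<forall>a\<in>mons m. P a \<in> E" and f: "\<forall>a\<in>mons m. f a \<in> E"
  shows "mm m P f a \<in> E"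
proof (cases "a \<in> mons m")
  case True
  show ?thesis unfolding mm_apply[OF True]
    by (intro sf_sum[OF E] sf_mult[OF E]) (use P f lset_mons lset_diff True in auto)
qed (simp add: mm_out sf_0[OF E])

lemma mm_nonzero_split:
  assumes "mm m P Q a \<noteq> 0"
  shows "\<exists>b c. b \<in> mons m \<and> c \<in> mons m \<and> P b \<noteq> 0 \<and> Q c \<noteq> 0 \<and> a = (\<lambda>i. b i + c i)"
proof -
  have am: "a \<in> mons m" using assms mm_out by blast
  from assms obtain b where b: "b \<in> lset m a" "P b * Q (\<lambda>i. a i - b i) \<noteq> 0"
    unfolding mm_apply[OF am] using sum.not_neutral_contains_not_neutral by blast
  show ?thesis
    using b lset_diff[OF b(1) am] lset_mons[OF b(1)]
    by (intro exI[of _ b] exI[of _ "\<lambda>i. a i - b i"]) (auto simp: lset_def)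
qed

lemma mm_fsupp:
  assumes "finite {a\<in>mons m. P a \<noteq> 0}" "finite {a\<in>mons m. Q a \<noteq> 0}"
  shows "finite {a\<in>mons m. mm m P Q a \<noteq> 0}"
proof -
  have "{a\<in>mons m. mm m P Q a \<noteq> 0} \<subseteq>
      (\<lambda>(b, c). \<lambda>i. b i + c i) ` ({a\<in>mons m. P a \<noteq> 0} \<times> {a\<in>mons m. Q a \<noteq> 0})"
  proof
    fix a assume "a \<in> {a\<in>mons m. mm m P Q a \<noteq> 0}"
    then obtain b c where "b \<in> mons m" "c \<in> mons m" "P b \<noteq> 0" "Q c \<noteq> 0" "a = (\<lambda>i. b i + c i)"
      using mm_nonzero_split by blast
    thus "a \<in> (\<lambda>(b, c). \<lambda>i. b i + c i) ` ({a\<in>mons m. P a \<noteq> 0} \<times> {a\<in>mons m. Q a \<noteq> 0})"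
      by force
  qed
  thus ?thesis by (rule finite_subset) (use assms in auto)
qed

lemma mpoly_mm:
  assumes E: "subfield_C E" and "mpoly_over m E P" "mpoly_over m E Q"
  shows "mpoly_over m E (mm m P Q)"
  using assms mm_vals[OF E] mm_fsupp unfolding mpoly_over_def by blast

lemma mpoly_add:
  assumes E: "subfield_C E" and "mpoly_over m E P" "mpoly_over m E Q"
  shows "mpoly_over m E (\<lambda>a. P a + Q a)"
proof -
  have "{a\<in>mons m. P a + Q a \<noteq> 0} \<subseteq> {a\<in>mons m. P a \<noteq> 0} \<union> {a\<in>mons m. Q a \<noteq> 0}" by auto
  thus ?thesis using assms sf_add[OF E] unfolding mpoly_over_def by (auto intro: finite_subset)
qed

lemma mpoly_neg:
  assumes E: "subfield_C E" and "mpoly_over m E P"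
  shows "mpoly_over m E (\<lambda>a. - P a)"
  using assms sf_neg[OF E] unfolding mpoly_over_def by auto

lemma mpoly_diff:
  assumes E: "subfield_C E" and "mpoly_over m E P" "mpoly_over m E Q"
  shows "mpoly_over m E (\<lambda>a. P a - Q a)"
  using mpoly_add[OF E assms(2) mpoly_neg[OF E assms(3)]] by simp

lemma mpoly_zero: "subfield_C E \<Longrightarrow> mpoly_over m E (\<lambda>_. 0)"
  by (simp add: mpoly_over_def sf_0)

lemma mpoly_sum:
  assumes E: "subfield_C E" and "\<And>j. j \<in> J \<Longrightarrow> mpoly_over m E (P j)"
  shows "mpoly_over m E (\<lambda>a. \<Sum>j\<in>J. P j a)"
  using assms(2)
proof (induction J rule: infinite_finite_induct)
  case (infinite A) thus ?case using mpoly_zero[OF E] by simp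
next
  case empty thus ?case using mpoly_zero[OF E] by simp
next
  case (insert x F) thus ?case using mpoly_add[OF E] by simp
qed

lemma mpoly_scal:
  assumes E: "subfield_C E" and "c \<in> E" "mpoly_over m E P"
  shows "mpoly_over m E (\<lambda>a. c * P a)"
proof -
  have "{a\<in>mons m. c * P a \<noteq> 0} \<subseteq> {a\<in>mons m. P a \<noteq> 0}" by auto
  thus ?thesis using assms sf_mult[OF E] unfolding mpoly_over_def by (auto intro: finite_subset)
qed

lemma mpoly_mono: "subfield_C E \<Longrightarrow> mpoly_over m E (mmono \<beta>)"
proof -
  assume E: "subfield_C E"
  have "{a\<in>mons m. mmono \<beta> a \<noteq> 0} \<subseteq> {\<beta>}" by (auto simp: mmono_def)
  thus ?thesis using E sf_0 sf_1 unfolding mpoly_over_def by (auto simp: mmono_def intro: finite_subset)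
qed

lemma mpoly_one: "subfield_C E \<Longrightarrow> mpoly_over m E mone"
  using mpoly_mono[of E m "\<lambda>_. 0"] by (simp add: mmono_def mone_def)

lemma nz_one: "nz m mone"
  unfolding nz_def mone_def by (intro bexI[of _ "\<lambda>_. 0"]) (auto simp: mons_def)

lemma digits_inj:
  fixes W :: nat
  assumes "\<forall>i<m. a i < W" "\<forall>i<m. b i < W" "(\<Sum>i<m. a i * W ^ i) = (\<Sum>i<m. b i * W ^ i)"
  shows "\<forall>i<m. a i = b i"
  using assms
proof (induction m arbitrary: a b)
  case 0 thus ?case by simp
next
  case (Suc m)
  have sh: "(\<Sum>i<Suc m. x i * W ^ i) = x 0 + W * (\<Sum>i<m. x (Suc i) * W ^ i)" for x :: "nat \<Rightarrow> nat"
    by (simp only: sum.lessThan_Suc_shift power_Suc sum_distrib_left mult.left_commute) simp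
  have a0: "a 0 < W" and b0: "b 0 < W" using Suc.prems by auto
  have e: "a 0 + W * (\<Sum>i<m. a (Suc i) * W ^ i) = b 0 + W * (\<Sum>i<m. b (Suc i) * W ^ i)"
    using Suc.prems(3) unfolding sh .
  have "(a 0 + W * (\<Sum>i<m. a (Suc i) * W ^ i)) mod W = a 0" using a0 by simp
  moreover have "(b 0 + W * (\<Sum>i<m. b (Suc i) * W ^ i)) mod W = b 0" using b0 by simp
  ultimately have e0: "a 0 = b 0" using e by simp
  have W0: "W > 0" using a0 by simp
  have "(\<Sum>i<m. a (Suc i) * W ^ i) = (\<Sum>i<m. b (Suc i) * W ^ i)" using e e0 W0 by simp
  moreover have "\<forall>i<m. a (Suc i) < W" "\<forall>i<m. b (Suc i) < W"
    using Suc.prems(1,2) by simp_all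
  ultimately have IH: "\<forall>i<m. a (Suc i) = b (Suc i)"
    using Suc.IH[of "\<lambda>i. a (Suc i)" "\<lambda>i. b (Suc i)"] by blast
  show ?case
  proof (intro allI impI)
    fix i assume "i < Suc m"
    thus "a i = b i" using IH e0 by (cases i) auto
  qed
qed

lemma nz_mm:
  assumes fP: "finite {a\<in>mons m. P a \<noteq> 0}" and fQ: "finite {a\<in>mons m. Q a \<noteq> 0}"
    and nP: "nz m P" and nQ: "nz m Q"
  shows "nz m (mm m P Q)"
proof -
  define SP where "SP = {a\<in>mons m. P a \<noteq> 0}"
  define SQ where "SQ = {a\<in>mons m. Q a \<noteq> 0}"
  have fS: "finite (SP \<union> SQ)" using fP fQ by (simp add: SP_def SQ_def)
  define W where "W = Suc (\<Sum>a\<in>SP \<union> SQ. \<Sum>i<m. a i)"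
  have Wb: "a i < W" if "a \<in> SP \<union> SQ" "i < m" for a i
  proof -
    have "a i \<le> (\<Sum>i<m. a i)" using that(2) by (intro member_le_sum) auto
    also have "\<dots> \<le> (\<Sum>a\<in>SP \<union> SQ. \<Sum>i<m. a i)"
      using that(1) fS by (intro member_le_sum[where f = "\<lambda>a. \<Sum>i<m. a i"]) auto
    finally show ?thesis by (simp add: W_def)
  qed
  define wt where "wt a = (\<Sum>i<m. a i * W ^ i)" for a :: "nat \<Rightarrow> nat"
  have wt_inj: "a = b" if "a \<in> SP \<union> SQ" "b \<in> SP \<union> SQ" "wt a = wt b" for a b
  proof
    fix i show "a i = b i"
    proof (cases "i < m")
      case True
      have "\<forall>i<m. a i < W" using Wb that(1) by blast
      moreover have "\<forall>i<m. b i < W" using Wb that(2) by blast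
      moreover have "(\<Sum>i<m. a i * W ^ i) = (\<Sum>i<m. b i * W ^ i)" using that(3) by (simp add: wt_def)
      ultimately have "\<forall>i<m. a i = b i" by (rule digits_inj)
      thus ?thesis using True by blast
    next
      case False thus ?thesis using that by (auto simp: SP_def SQ_def mons_def)
    qed
  qed
  have SPne: "SP \<noteq> {}" and SQne: "SQ \<noteq> {}" using nP nQ by (auto simp: nz_def SP_def SQ_def)
  have fSP: "finite SP" and fSQ: "finite SQ" using fP fQ by (auto simp: SP_def SQ_def)
  have "Max (wt ` SP) \<in> wt ` SP" by (rule Max_in) (use fSP SPne in auto)
  then obtain A where A: "A \<in> SP" "wt A = Max (wt ` SP)" by (metis imageE)
  have "Max (wt ` SQ) \<in> wt ` SQ" by (rule Max_in) (use fSQ SQne in auto)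
  then obtain B where B: "B \<in> SQ" "wt B = Max (wt ` SQ)" by (metis imageE)
  have Ale: "wt b \<le> wt A" if "b \<in> SP" for b
    unfolding A(2) by (rule Max_ge) (use fSP that in auto)
  have Ble: "wt c \<le> wt B" if "c \<in> SQ" for c
    unfolding B(2) by (rule Max_ge) (use fSQ that in auto)
  define C where "C = (\<lambda>i. A i + B i)"
  have Cm: "C \<in> mons m" using A B by (auto simp: C_def SP_def SQ_def mons_def)
  have AC: "A \<in> lset m C" using A by (auto simp: lset_def C_def SP_def)
  have CA: "(\<lambda>i. C i - A i) = B" by (auto simp: C_def)
  have wt_add: "wt (\<lambda>i. x i + y i) = wt x + wt y" for x y by (simp add: wt_def sum.distrib algebra_simps)
  have zero: "P b * Q (\<lambda>i. C i - b i) = 0" if b: "b \<in> lset m C - {A}" for b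
  proof (rule ccontr)
    assume "P b * Q (\<lambda>i. C i - b i) \<noteq> 0"
    hence bP: "b \<in> SP" and cQ: "(\<lambda>i. C i - b i) \<in> SQ"
      using b lset_mons lset_diff[OF _ Cm] by (auto simp: SP_def SQ_def)
    have bC: "(\<lambda>i. b i + (C i - b i)) = C" using b by (auto simp: lset_def)
    have "wt C = wt A + wt B" unfolding C_def by (rule wt_add)
    moreover have "wt C = wt b + wt (\<lambda>i. C i - b i)" using wt_add[of b "\<lambda>i. C i - b i"] unfolding bC .
    ultimately have "wt b + wt (\<lambda>i. C i - b i) = wt A + wt B" by simp
    moreover have "wt b \<le> wt A" using Ale[OF bP] .
    moreover have "wt (\<lambda>i. C i - b i) \<le> wt B" using Ble[OF cQ] .
    ultimately have "wt b = wt A" by linarith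
    hence "b = A" using wt_inj bP A(1) by blast
    with b show False by simp
  qed
  have "mm m P Q C = P A * Q (\<lambda>i. C i - A i) + (\<Sum>b\<in>lset m C - {A}. P b * Q (\<lambda>i. C i - b i))"
    unfolding mm_apply[OF Cm] using AC by (subst sum.remove) auto
  also have "(\<Sum>b\<in>lset m C - {A}. P b * Q (\<lambda>i. C i - b i)) = 0"
    using zero by (intro sum.neutral) blast
  also have "P A * Q (\<lambda>i. C i - A i) + 0 = P A * Q B" using CA by simp
  finally have "mm m P Q C \<noteq> 0" using A B by (simp add: SP_def SQ_def)
  thus ?thesis using Cm by (auto simp: nz_def)
qed

lemma mpoly_nz_mm:
  "mpoly_over m E P \<Longrightarrow> mpoly_over m E Q \<Longrightarrow> nz m P \<Longrightarrow> nz m Q \<Longrightarrow> nz m (mm m P Q)"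
  by (rule nz_mm) (auto simp: mpoly_over_def)

lemma mm_normal: "mm m mone (mm m P f) = mm m P f"
  by (rule ext) (simp add: mm_one_left mm_out)

lemma lin_dep:
  fixes B :: "'g set" and b :: "'g \<Rightarrow> (nat \<Rightarrow> nat) \<Rightarrow> complex"
  assumes E: "subfield_C E" and fB: "finite B"
  shows "finite I \<Longrightarrow> card B < card I \<Longrightarrow>
    (\<forall>i\<in>I. mpoly_over m E (D i) \<and> nz m (D i)) \<Longrightarrow> (\<forall>i\<in>I. \<forall>\<gamma>\<in>B. mpoly_over m E (p i \<gamma>)) \<Longrightarrow>
    (\<forall>i\<in>I. mm m (D i) (f i) = (\<lambda>a. \<Sum>\<gamma>\<in>B. mm m (p i \<gamma>) (b \<gamma>) a)) \<Longrightarrow>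
    \<exists>c. (\<forall>i\<in>I. mpoly_over m E (c i)) \<and> (\<exists>i\<in>I. nz m (c i)) \<and> (\<lambda>a. \<Sum>i\<in>I. mm m (c i) (f i) a) = (\<lambda>_. 0)"
  using fB
proof (induction B arbitrary: I D p f rule: finite_induct)
  case empty
  then obtain i0 where i0: "i0 \<in> I" by fastforce
  define c where "c = (\<lambda>i. if i = i0 then D i0 else (\<lambda>_. 0))"
  have "(\<lambda>a. \<Sum>i\<in>I. mm m (c i) (f i) a) = (\<lambda>_. 0)"
  proof
    fix a
    have "(\<Sum>i\<in>I. mm m (c i) (f i) a) = mm m (c i0) (f i0) a + (\<Sum>i\<in>I - {i0}. mm m (c i) (f i) a)"
      using i0 empty.prems(1) by (subst sum.remove) auto
    also have "(\<Sum>i\<in>I - {i0}. mm m (c i) (f i) a) = 0"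
      by (intro sum.neutral) (auto simp: c_def mm_zero_left)
    also have "mm m (c i0) (f i0) a = 0" using empty.prems(5) i0 by (simp add: c_def)
    finally show "(\<Sum>i\<in>I. mm m (c i) (f i) a) = 0" by simp
  qed
  moreover have "\<forall>i\<in>I. mpoly_over m E (c i)" using empty.prems(3) mpoly_zero[OF E] by (auto simp: c_def)
  moreover have "nz m (c i0)" using empty.prems(3) i0 by (simp add: c_def)
  ultimately show ?case using i0 by blast
next
  case (insert \<gamma>0 B)
  show ?case
  proof (cases "\<forall>i\<in>I. \<forall>a\<in>mons m. p i \<gamma>0 a = 0")
    case True
    have rel: "\<forall>i\<in>I. mm m (D i) (f i) = (\<lambda>a. \<Sum>\<gamma>\<in>B. mm m (p i \<gamma>) (b \<gamma>) a)"
    proof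
      fix i assume i: "i \<in> I"
      have "mm m (p i \<gamma>0) (b \<gamma>0) = (\<lambda>_. 0)" using True i by (intro mm_zero_on_left) auto
      thus "mm m (D i) (f i) = (\<lambda>a. \<Sum>\<gamma>\<in>B. mm m (p i \<gamma>) (b \<gamma>) a)"
        using insert.prems(5) i insert.hyps by (simp add: sum.insert)
    qed
    show ?thesis
      by (rule insert.IH[OF insert.prems(1) _ insert.prems(3) _ rel])
         (use insert.prems(2,4) insert.hyps in auto)
  next
    case False
    then obtain i0 where i0: "i0 \<in> I" and nzp: "nz m (p i0 \<gamma>0)" by (auto simp: nz_def)
    define I' where "I' = I - {i0}"
    define \<pi> where "\<pi> = p i0 \<gamma>0"
    have \<pi>: "mpoly_over m E \<pi>" using insert.prems(4) i0 by (simp add: \<pi>_def)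
    define f' where "f' i = (\<lambda>a. mm m \<pi> (mm m (D i) (f i)) a - mm m (p i \<gamma>0) (mm m (D i0) (f i0)) a)" for i
    define p' where "p' i \<gamma> = (\<lambda>a. mm m \<pi> (p i \<gamma>) a - mm m (p i \<gamma>0) (p i0 \<gamma>) a)" for i \<gamma>
    have fI': "finite I'" using insert.prems(1) by (simp add: I'_def)
    have cI': "card B < card I'"
      using insert.prems(1,2) i0 insert.hyps by (simp add: I'_def card_Diff_singleton)
    have D': "\<forall>i\<in>I'. mpoly_over m E mone \<and> nz m mone" using mpoly_one[OF E] nz_one by blast
    have p'p: "\<forall>i\<in>I'. \<forall>\<gamma>\<in>B. mpoly_over m E (p' i \<gamma>)"
      unfolding p'_def using insert.prems(4) i0 \<pi>
      by (auto simp: I'_def intro!: mpoly_diff[OF E] mpoly_mm[OF E])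
    have expand: "mm m P (mm m (D i) (f i)) = (\<lambda>a. \<Sum>\<gamma>\<in>insert \<gamma>0 B. mm m (mm m P (p i \<gamma>)) (b \<gamma>) a)"
      if "i \<in> I" for P i
      using insert.prems(5) that by (simp add: mm_sum_right mm_assoc)
    have rel': "\<forall>i\<in>I'. mm m mone (f' i) = (\<lambda>a. \<Sum>\<gamma>\<in>B. mm m (p' i \<gamma>) (b \<gamma>) a)"
    proof
      fix i assume i: "i \<in> I'"
      hence iI: "i \<in> I" by (simp add: I'_def)
      have n: "mm m mone (f' i) = f' i"
        by (rule ext) (simp add: f'_def mm_one_left mm_out)
      show "mm m mone (f' i) = (\<lambda>a. \<Sum>\<gamma>\<in>B. mm m (p' i \<gamma>) (b \<gamma>) a)"
      proof
        fix a
        have "f' i a = (\<Sum>\<gamma>\<in>insert \<gamma>0 B. mm m (mm m \<pi> (p i \<gamma>)) (b \<gamma>) a)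
                     - (\<Sum>\<gamma>\<in>insert \<gamma>0 B. mm m (mm m (p i \<gamma>0) (p i0 \<gamma>)) (b \<gamma>) a)"
          unfolding f'_def expand[OF iI] expand[OF i0] ..
        also have "\<dots> = (\<Sum>\<gamma>\<in>B. mm m (mm m \<pi> (p i \<gamma>)) (b \<gamma>) a)
                     - (\<Sum>\<gamma>\<in>B. mm m (mm m (p i \<gamma>0) (p i0 \<gamma>)) (b \<gamma>) a)"
          using insert.hyps by (simp add: sum.insert \<pi>_def mm_comm[of m "p i \<gamma>0" "p i0 \<gamma>0"])
        also have "\<dots> = (\<Sum>\<gamma>\<in>B. mm m (p' i \<gamma>) (b \<gamma>) a)"
          unfolding sum_subtractf[symmetric] p'_def mm_diff_left ..
        finally show "mm m mone (f' i) a = (\<Sum>\<gamma>\<in>B. mm m (p' i \<gamma>) (b \<gamma>) a)" using n by simp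
      qed
    qed
    obtain c' where c'p: "\<forall>i\<in>I'. mpoly_over m E (c' i)" and c'nz: "\<exists>i\<in>I'. nz m (c' i)"
      and c's: "(\<lambda>a. \<Sum>i\<in>I'. mm m (c' i) (f' i) a) = (\<lambda>_. 0)"
      using insert.IH[OF fI' cI' D' p'p rel'] by blast
    define c where "c i = (if i = i0 then (\<lambda>a. - (\<Sum>j\<in>I'. mm m (c' j) (mm m (p j \<gamma>0) (D i0)) a))
                          else mm m (c' i) (mm m \<pi> (D i)))" for i
    have sum0: "(\<lambda>a. \<Sum>i\<in>I. mm m (c i) (f i) a) = (\<lambda>_. 0)"
    proof
      fix a
      have "(\<Sum>i\<in>I. mm m (c i) (f i) a) = mm m (c i0) (f i0) a + (\<Sum>i\<in>I'. mm m (c i) (f i) a)"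
        unfolding I'_def using i0 insert.prems(1) by (subst sum.remove) auto
      also have "mm m (c i0) (f i0) a = - (\<Sum>j\<in>I'. mm m (mm m (c' j) (mm m (p j \<gamma>0) (D i0))) (f i0) a)"
        by (simp add: c_def mm_neg_left mm_sum_left)
      also have "(\<Sum>i\<in>I'. mm m (c i) (f i) a) = (\<Sum>i\<in>I'. mm m (mm m (c' i) (mm m \<pi> (D i))) (f i) a)"
        by (intro sum.cong) (auto simp: c_def I'_def)
      also have "- (\<Sum>j\<in>I'. mm m (mm m (c' j) (mm m (p j \<gamma>0) (D i0))) (f i0) a) +
                 (\<Sum>i\<in>I'. mm m (mm m (c' i) (mm m \<pi> (D i))) (f i) a) = (\<Sum>i\<in>I'. mm m (c' i) (f' i) a)"
      proof -
        have "(\<Sum>i\<in>I'. mm m (c' i) (f' i) a) = (\<Sum>i\<in>I'. mm m (mm m (c' i) (mm m \<pi> (D i))) (f i) a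
               - mm m (mm m (c' i) (mm m (p i \<gamma>0) (D i0))) (f i0) a)"
          by (intro sum.cong) (simp_all add: f'_def mm_diff_right mm_assoc)
        thus ?thesis by (simp add: sum_subtractf)
      qed
      also have "\<dots> = 0" using fun_cong[OF c's, of a] by simp
      finally show "(\<Sum>i\<in>I. mm m (c i) (f i) a) = 0" .
    qed
    have cp: "\<forall>i\<in>I. mpoly_over m E (c i)"
    proof
      fix i assume i: "i \<in> I"
      show "mpoly_over m E (c i)"
      proof (cases "i = i0")
        case True
        have "mpoly_over m E (\<lambda>a. - (\<Sum>j\<in>I'. mm m (c' j) (mm m (p j \<gamma>0) (D i0)) a))"
          using c'p insert.prems(3,4) i0
          by (intro mpoly_neg[OF E] mpoly_sum[OF E] mpoly_mm[OF E]) (auto simp: I'_def)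
        thus ?thesis using True by (simp add: c_def)
      next
        case False
        thus ?thesis using c'p insert.prems(3) i \<pi>
          by (auto simp: c_def I'_def intro!: mpoly_mm[OF E])
      qed
    qed
    obtain i1 where i1: "i1 \<in> I'" "nz m (c' i1)" using c'nz by blast
    have i1I: "i1 \<in> I" "i1 \<noteq> i0" using i1 by (auto simp: I'_def)
    have "nz m (c i1)"
      unfolding c_def using i1I i1 c'p insert.prems(3) \<pi> nzp
      by (auto simp: \<pi>_def intro!: mpoly_nz_mm mpoly_mm[OF E])
    with cp sum0 i1I show ?thesis by blast
  qed
qed

lemma common_denom:
  fixes B :: "'g set" and d :: "'g \<Rightarrow> (nat \<Rightarrow> nat) \<Rightarrow> complex" and S :: "'g set"
  assumes E: "subfield_C E" and fS: "finite S"
    and hyp: "\<forall>\<beta>\<in>S. \<exists>q p. mpoly_over m E q \<and> nz m q \<and> (\<forall>\<gamma>\<in>B. mpoly_over m E (p \<gamma>)) \<and>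
              mm m q (d \<beta>) = (\<lambda>a. \<Sum>\<gamma>\<in>B. mm m (p \<gamma>) (d \<gamma>) a)"
  shows "\<exists>D P. mpoly_over m E D \<and> nz m D \<and> (\<forall>\<beta>\<in>S. \<forall>\<gamma>\<in>B. mpoly_over m E (P \<beta> \<gamma>)) \<and>
              (\<forall>\<beta>\<in>S. mm m D (d \<beta>) = (\<lambda>a. \<Sum>\<gamma>\<in>B. mm m (P \<beta> \<gamma>) (d \<gamma>) a))"
  using fS hyp
proof (induction S rule: finite_induct)
  case empty
  show ?case using mpoly_one[OF E] nz_one by blast
next
  case (insert \<beta>0 S)
  obtain D P where D: "mpoly_over m E D" "nz m D" and P: "\<forall>\<beta>\<in>S. \<forall>\<gamma>\<in>B. mpoly_over m E (P \<beta> \<gamma>)"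
    and rel: "\<forall>\<beta>\<in>S. mm m D (d \<beta>) = (\<lambda>a. \<Sum>\<gamma>\<in>B. mm m (P \<beta> \<gamma>) (d \<gamma>) a)"
    using insert.IH insert.prems by auto
  obtain q0 p0 where q0: "mpoly_over m E q0" "nz m q0" and p0: "\<forall>\<gamma>\<in>B. mpoly_over m E (p0 \<gamma>)"
    and rel0: "mm m q0 (d \<beta>0) = (\<lambda>a. \<Sum>\<gamma>\<in>B. mm m (p0 \<gamma>) (d \<gamma>) a)"
    using insert.prems by auto
  define P' where "P' \<beta> \<gamma> = (if \<beta> = \<beta>0 then mm m D (p0 \<gamma>) else mm m q0 (P \<beta> \<gamma>))" for \<beta> \<gamma>
  have "mpoly_over m E (mm m q0 D)" by (rule mpoly_mm[OF E q0(1) D(1)])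
  moreover have "nz m (mm m q0 D)" by (rule mpoly_nz_mm[OF q0(1) D(1) q0(2) D(2)])
  moreover have "\<forall>\<beta>\<in>insert \<beta>0 S. \<forall>\<gamma>\<in>B. mpoly_over m E (P' \<beta> \<gamma>)"
    using P p0 D q0 by (auto simp: P'_def intro!: mpoly_mm[OF E])
  moreover have "\<forall>\<beta>\<in>insert \<beta>0 S. mm m (mm m q0 D) (d \<beta>) = (\<lambda>a. \<Sum>\<gamma>\<in>B. mm m (P' \<beta> \<gamma>) (d \<gamma>) a)"
  proof
    fix \<beta> assume \<beta>: "\<beta> \<in> insert \<beta>0 S"
    show "mm m (mm m q0 D) (d \<beta>) = (\<lambda>a. \<Sum>\<gamma>\<in>B. mm m (P' \<beta> \<gamma>) (d \<gamma>) a)"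
    proof (cases "\<beta> = \<beta>0")
      case True
      have "mm m (mm m q0 D) (d \<beta>) = mm m D (mm m q0 (d \<beta>0))"
        by (simp add: mm_assoc mm_comm[of m q0 D] True)
      also have "\<dots> = (\<lambda>a. \<Sum>\<gamma>\<in>B. mm m (P' \<beta> \<gamma>) (d \<gamma>) a)"
        unfolding rel0 by (simp add: mm_sum_right mm_assoc P'_def True)
      finally show ?thesis .
    next
      case False
      hence \<beta>S: "\<beta> \<in> S" using \<beta> by simp
      have "mm m (mm m q0 D) (d \<beta>) = mm m q0 (mm m D (d \<beta>))" by (simp add: mm_assoc)
      also have "\<dots> = (\<lambda>a. \<Sum>\<gamma>\<in>B. mm m (P' \<beta> \<gamma>) (d \<gamma>) a)"
        unfolding rel[rule_format, OF \<beta>S] by (simp add: mm_sum_right mm_assoc P'_def False)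
      finally show ?thesis .
    qed
  qed
  ultimately show ?case by blast
qed

definition fall :: "nat \<Rightarrow> nat \<Rightarrow> complex" where
  "fall x b = (\<Prod>j<b. (of_nat x - of_nat j))"

lemma fall_0 [simp]: "fall x 0 = 1" by (simp add: fall_def)

lemma fall_Suc: "fall x (Suc b) = fall x b * (of_nat x - of_nat b)"
  by (simp add: fall_def)

lemma fall_gt: "x < b \<Longrightarrow> fall x b = 0"
  unfolding fall_def by (rule prod_zero) (auto intro: bexI[of _ x])

lemma fall_poch:
  assumes "b \<le> x"
  shows "pochhammer (of_nat (x - b + 1) :: complex) b = fall x b"
proof -
  have "pochhammer (of_nat (x - b + 1) :: complex) b = (\<Prod>i<b. of_nat (x - b + 1) + of_nat i)"
    by (simp add: pochhammer_prod atLeast0LessThan)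
  also have "\<dots> = (\<Prod>i<b. of_nat x - of_nat (b - Suc i))"
  proof (rule prod.cong[OF refl])
    fix i assume "i \<in> {..<b}"
    hence "i < b" by simp
    hence "x - b + 1 + i = x - (b - Suc i)" "b - Suc i \<le> x" using assms by auto
    thus "(of_nat (x - b + 1) :: complex) + of_nat i = of_nat x - of_nat (b - Suc i)"
      by (metis of_nat_add of_nat_diff)
  qed
  also have "\<dots> = fall x b"
    unfolding fall_def by (rule prod.nat_diff_reindex)
  finally show ?thesis .
qed

lemma mono_deriv:
  assumes \<beta>: "\<beta> \<in> mons m" and a: "a \<in> mons m"
  shows "mm m (mmono \<beta>) (ms_deriv m \<beta> F) a = (\<Prod>i<m. fall (a i) (\<beta> i)) * F a"
proof (cases "\<beta> \<in> lset m a")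
  case True
  hence le: "\<And>i. \<beta> i \<le> a i" by (simp add: lset_def)
  have e: "(\<lambda>i. a i - \<beta> i + \<beta> i) = a" using le by auto
  have "mm m (mmono \<beta>) (ms_deriv m \<beta> F) a = ms_deriv m \<beta> F (\<lambda>i. a i - \<beta> i)"
    using mm_mono_left[OF a] True by simp
  also have "\<dots> = (\<Prod>i<m. fall (a i) (\<beta> i)) * F a"
    unfolding ms_deriv_def e using le fall_poch by (simp add: add.commute)
  finally show ?thesis .
next
  case False
  then obtain i where i: "a i < \<beta> i" using \<beta> by (auto simp: lset_def not_le)
  have "i < m" using i a \<beta> by (auto simp: mons_def) (metis less_irrefl not_le)
  hence "(\<Prod>i<m. fall (a i) (\<beta> i)) = 0" using fall_gt[OF i] by (intro prod_zero) auto
  thus ?thesis using mm_mono_left[OF a] False by simp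
qed

definition tstep :: "nat \<Rightarrow> (nat \<Rightarrow> nat) \<times> nat \<Rightarrow> ((nat \<Rightarrow> nat) \<times> nat) list" where
  "tstep m x = map (\<lambda>i. ((fst x)(i := Suc (fst x i)), snd x)) [0..<m] @ [(fst x, snd x * (\<Sum>i<m. fst x i))]"

lemma sum_list_concat_map:
  "sum_list (map h (concat (map g L))) = sum_list (map (\<lambda>x. sum_list (map h (g x))) L)"
  by (induction L) auto

lemma step_identity:
  fixes a \<beta> :: "nat \<Rightarrow> nat"
  shows "of_nat (\<Sum>i<m. a i) * (\<Prod>j<m. fall (a j) (\<beta> j)) =
     (\<Sum>i<m. \<Prod>j<m. fall (a j) ((\<beta>(i := Suc (\<beta> i))) j)) + of_nat (\<Sum>i<m. \<beta> i) * (\<Prod>j<m. fall (a j) (\<beta> j))"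
proof -
  define PP where "PP = (\<Prod>j<m. fall (a j) (\<beta> j))"
  have one: "(\<Prod>j<m. fall (a j) ((\<beta>(i := Suc (\<beta> i))) j)) = (of_nat (a i) - of_nat (\<beta> i)) * PP"
    if i: "i < m" for i
  proof -
    have "(\<Prod>j<m. fall (a j) ((\<beta>(i := Suc (\<beta> i))) j)) =
        fall (a i) (Suc (\<beta> i)) * (\<Prod>j\<in>{..<m} - {i}. fall (a j) ((\<beta>(i := Suc (\<beta> i))) j))"
      using i by (subst prod.remove[of _ i]) auto
    also have "(\<Prod>j\<in>{..<m} - {i}. fall (a j) ((\<beta>(i := Suc (\<beta> i))) j)) = (\<Prod>j\<in>{..<m} - {i}. fall (a j) (\<beta> j))"
      by (intro prod.cong) auto
    also have "fall (a i) (Suc (\<beta> i)) * \<dots> = (of_nat (a i) - of_nat (\<beta> i)) * (fall (a i) (\<beta> i) * (\<Prod>j\<in>{..<m} - {i}. fall (a j) (\<beta> j)))"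
      by (simp add: fall_Suc algebra_simps)
    also have "fall (a i) (\<beta> i) * (\<Prod>j\<in>{..<m} - {i}. fall (a j) (\<beta> j)) = PP"
      unfolding PP_def using i by (subst prod.remove[of _ i]) auto
    finally show ?thesis .
  qed
  have "(\<Sum>i<m. \<Prod>j<m. fall (a j) ((\<beta>(i := Suc (\<beta> i))) j)) = (\<Sum>i<m. (of_nat (a i) - of_nat (\<beta> i)) * PP)"
  proof (rule sum.cong[OF refl])
    fix i assume "i \<in> {..<m}"
    thus "(\<Prod>j<m. fall (a j) ((\<beta>(i := Suc (\<beta> i))) j)) = (of_nat (a i) - of_nat (\<beta> i)) * PP"
      by (intro one) simp
  qed
  also have "\<dots> = of_nat (\<Sum>i<m. a i) * PP - of_nat (\<Sum>i<m. \<beta> i) * PP"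
    by (simp add: sum_subtractf sum_distrib_right left_diff_distrib)
  finally show ?thesis unfolding PP_def by simp
qed

lemma theta_list:
  "\<exists>L :: ((nat \<Rightarrow> nat) \<times> nat) list. (\<forall>x\<in>set L. fst x \<in> mons m) \<and>
     (\<forall>a. (of_nat (\<Sum>i<m. a i) :: complex) ^ k = sum_list (map (\<lambda>x. of_nat (snd x) * (\<Prod>j<m. fall (a j) (fst x j))) L))"
proof (induction k)
  case 0
  show ?case by (intro exI[of _ "[(\<lambda>_. 0, 1)]"]) (auto simp: mons_def)
next
  case (Suc k)
  then obtain L where L: "\<forall>x\<in>set L. fst x \<in> mons m"
    and e: "\<forall>a. (of_nat (\<Sum>i<m. a i) :: complex) ^ k = sum_list (map (\<lambda>x. of_nat (snd x) * (\<Prod>j<m. fall (a j) (fst x j))) L)"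
    by blast
  define L' where "L' = concat (map (tstep m) L)"
  have "\<forall>x\<in>set L'. fst x \<in> mons m"
    using L by (auto simp: L'_def tstep_def mons_def)
  moreover have "\<forall>a. (of_nat (\<Sum>i<m. a i) :: complex) ^ Suc k = sum_list (map (\<lambda>x. of_nat (snd x) * (\<Prod>j<m. fall (a j) (fst x j))) L')"
  proof
    fix a :: "nat \<Rightarrow> nat"
    let ?h = "\<lambda>x. of_nat (snd x) * (\<Prod>j<m. fall (a j) (fst x j)) :: complex"
    have st: "sum_list (map ?h (tstep m x)) = of_nat (\<Sum>i<m. a i) * ?h x" for x
    proof -
      have "sum_list (map ?h (tstep m x)) =
          (\<Sum>i<m. of_nat (snd x) * (\<Prod>j<m. fall (a j) (((fst x)(i := Suc (fst x i))) j)))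
          + of_nat (snd x) * of_nat (\<Sum>i<m. fst x i) * (\<Prod>j<m. fall (a j) (fst x j))"
        by (simp add: tstep_def sum_set_upt_conv_sum_list_nat[symmetric] atLeast0LessThan o_def)
      also have "\<dots> = of_nat (snd x) * ((\<Sum>i<m. \<Prod>j<m. fall (a j) (((fst x)(i := Suc (fst x i))) j))
          + of_nat (\<Sum>i<m. fst x i) * (\<Prod>j<m. fall (a j) (fst x j)))"
        by (simp add: sum_distrib_left sum_distrib_right mult_ac distrib_left)
      also have "\<dots> = of_nat (snd x) * (of_nat (\<Sum>i<m. a i) * (\<Prod>j<m. fall (a j) (fst x j)))"
        using step_identity[where \<beta>="fst x" and a=a and m=m] by simp
      finally show ?thesis by (simp add: algebra_simps)
    qed
    have "sum_list (map ?h L') = sum_list (map (\<lambda>x. of_nat (\<Sum>i<m. a i) * ?h x) L)"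
      unfolding L'_def sum_list_concat_map st ..
    also have "\<dots> = of_nat (\<Sum>i<m. a i) * sum_list (map ?h L)"
      by (simp add: sum_list_const_mult)
    also have "\<dots> = (of_nat (\<Sum>i<m. a i) :: complex) ^ Suc k" using e by simp
    finally show "(of_nat (\<Sum>i<m. a i) :: complex) ^ Suc k = sum_list (map ?h L')" by simp
  qed
  ultimately show ?case by blast
qed

lemma theta_idx:
  "\<exists>n (\<beta> :: nat \<Rightarrow> nat \<Rightarrow> nat) (c :: nat \<Rightarrow> nat). (\<forall>j<n. \<beta> j \<in> mons m) \<and>
     (\<forall>a. (of_nat (\<Sum>i<m. a i) :: complex) ^ k = (\<Sum>j<n. of_nat (c j) * (\<Prod>i<m. fall (a i) (\<beta> j i))))"
proof -
  obtain L :: "((nat \<Rightarrow> nat) \<times> nat) list" where L: "\<forall>x\<in>set L. fst x \<in> mons m"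
    and e: "\<forall>a. (of_nat (\<Sum>i<m. a i) :: complex) ^ k = sum_list (map (\<lambda>x. of_nat (snd x) * (\<Prod>j<m. fall (a j) (fst x j))) L)"
    using theta_list by blast
  show ?thesis
  proof (intro exI conjI allI impI)
    fix j assume "j < length L"
    thus "fst (L ! j) \<in> mons m" using L nth_mem by blast
  next
    fix a :: "nat \<Rightarrow> nat"
    show "(of_nat (\<Sum>i<m. a i) :: complex) ^ k = (\<Sum>j<length L. of_nat (snd (L ! j)) * (\<Prod>i<m. fall (a i) (fst (L ! j) i)))"
      using e by (simp add: sum_list_sum_nth atLeast0LessThan)
  qed
qed

definition ths :: "nat \<Rightarrow> ((nat \<Rightarrow> nat) \<Rightarrow> complex) \<Rightarrow> nat \<Rightarrow> (nat \<Rightarrow> nat) \<Rightarrow> complex" where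
  "ths m F k = (\<lambda>a. (of_nat (\<Sum>i<m. a i)) ^ k * F a)"

lemma mm_swap: "mm m D (mm m M X) = mm m M (mm m D X)"
  by (simp add: mm_assoc mm_comm[of m D M])

lemma theta_rel:
  assumes \<beta>: "\<forall>j<n. \<beta> j \<in> mons m"
    and ex: "\<forall>a. (of_nat (\<Sum>i<m. a i) :: complex) ^ k = (\<Sum>j<n. of_nat (c j) * (\<Prod>i<m. fall (a i) (\<beta> j i)))"
    and rel: "\<forall>j<n. mm m D (ms_deriv m (\<beta> j) F) = (\<lambda>a. \<Sum>\<gamma>\<in>B. mm m (P (\<beta> j) \<gamma>) (ms_deriv m \<gamma> F) a)"
  shows "mm m D (ths m F k) = (\<lambda>a. \<Sum>\<gamma>\<in>B. mm m (\<lambda>b. \<Sum>j<n. of_nat (c j) * mm m (mmono (\<beta> j)) (P (\<beta> j) \<gamma>) b) (ms_deriv m \<gamma> F) a)"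
proof -
  have th: "ths m F k b = (\<Sum>j<n. of_nat (c j) * mm m (mmono (\<beta> j)) (ms_deriv m (\<beta> j) F) b)"
    if b: "b \<in> mons m" for b
  proof -
    have "ths m F k b = (\<Sum>j<n. of_nat (c j) * (\<Prod>i<m. fall (b i) (\<beta> j i))) * F b"
      unfolding ths_def using ex by simp
    also have "\<dots> = (\<Sum>j<n. of_nat (c j) * ((\<Prod>i<m. fall (b i) (\<beta> j i)) * F b))"
      by (simp add: sum_distrib_right mult.assoc)
    also have "\<dots> = (\<Sum>j<n. of_nat (c j) * mm m (mmono (\<beta> j)) (ms_deriv m (\<beta> j) F) b)"
      using \<beta> b by (intro sum.cong refl) (simp add: mono_deriv)
    finally show ?thesis .
  qed
  have "mm m D (ths m F k) = mm m D (\<lambda>b. \<Sum>j<n. of_nat (c j) * mm m (mmono (\<beta> j)) (ms_deriv m (\<beta> j) F) b)"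
    by (rule mm_cong) (simp_all add: th)
  also have "\<dots> = (\<lambda>a. \<Sum>j<n. of_nat (c j) * mm m (mmono (\<beta> j)) (mm m D (ms_deriv m (\<beta> j) F)) a)"
    by (simp add: mm_sum_right mm_scal_right mm_swap)
  also have "\<dots> = (\<lambda>a. \<Sum>j<n. of_nat (c j) * (\<Sum>\<gamma>\<in>B. mm m (mm m (mmono (\<beta> j)) (P (\<beta> j) \<gamma>)) (ms_deriv m \<gamma> F) a))"
    using rel by (intro ext sum.cong refl) (simp add: mm_sum_right mm_assoc)
  also have "\<dots> = (\<lambda>a. \<Sum>\<gamma>\<in>B. mm m (\<lambda>b. \<Sum>j<n. of_nat (c j) * mm m (mmono (\<beta> j)) (P (\<beta> j) \<gamma>) b) (ms_deriv m \<gamma> F) a)"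
    by (rule ext) (simp add: mm_sum_left mm_scal_left sum_distrib_left sum.swap[of _ B])
  finally show ?thesis .
qed

lemma dfinite_mm:
  assumes "dfinite m E F"
  shows "\<exists>B. finite B \<and> B \<subseteq> mons m \<and> (\<forall>\<beta>\<in>mons m. \<exists>q p. mpoly_over m E q \<and> nz m q \<and>
     (\<forall>\<gamma>\<in>B. mpoly_over m E (p \<gamma>)) \<and>
     mm m q (ms_deriv m \<beta> F) = (\<lambda>a. \<Sum>\<gamma>\<in>B. mm m (p \<gamma>) (ms_deriv m \<gamma> F) a))"
proof -
  obtain B where B: "finite B" "B \<subseteq> mons m" and H: "\<forall>\<beta>\<in>mons m. \<exists>q p. mpoly_over m E q \<and> (\<exists>a\<in>mons m. q a \<noteq> 0) \<and>
        (\<forall>\<gamma>\<in>B. mpoly_over m E (p \<gamma>)) \<and>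
        (\<forall>a\<in>mons m. ms_mult m q (ms_deriv m \<beta> F) a = (\<Sum>\<gamma>\<in>B. ms_mult m (p \<gamma>) (ms_deriv m \<gamma> F) a))"
    using assms unfolding dfinite_def by blast
  have "\<forall>\<beta>\<in>mons m. \<exists>q p. mpoly_over m E q \<and> nz m q \<and>
     (\<forall>\<gamma>\<in>B. mpoly_over m E (p \<gamma>)) \<and>
     mm m q (ms_deriv m \<beta> F) = (\<lambda>a. \<Sum>\<gamma>\<in>B. mm m (p \<gamma>) (ms_deriv m \<gamma> F) a)"
  proof
    fix \<beta> assume "\<beta> \<in> mons m"
    then obtain q p where qp: "mpoly_over m E q" "\<exists>a\<in>mons m. q a \<noteq> 0" "\<forall>\<gamma>\<in>B. mpoly_over m E (p \<gamma>)"
      "\<forall>a\<in>mons m. ms_mult m q (ms_deriv m \<beta> F) a = (\<Sum>\<gamma>\<in>B. ms_mult m (p \<gamma>) (ms_deriv m \<gamma> F) a)"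
      using H by blast
    have "mm m q (ms_deriv m \<beta> F) = (\<lambda>a. \<Sum>\<gamma>\<in>B. mm m (p \<gamma>) (ms_deriv m \<gamma> F) a)"
      using qp(4) by (auto simp: mm_def fun_eq_iff)
    thus "\<exists>q p. mpoly_over m E q \<and> nz m q \<and>
     (\<forall>\<gamma>\<in>B. mpoly_over m E (p \<gamma>)) \<and>
     mm m q (ms_deriv m \<beta> F) = (\<lambda>a. \<Sum>\<gamma>\<in>B. mm m (p \<gamma>) (ms_deriv m \<gamma> F) a)"
      using qp by (auto simp: nz_def)
  qed
  thus ?thesis using B by blast
qed

lemma mv_ode:
  assumes E: "subfield_C E" and df: "dfinite m E F"
  shows "\<exists>r c. (\<forall>k\<le>r. mpoly_over m E (c k)) \<and> nz m (c r) \<and>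
           (\<lambda>a. \<Sum>k\<le>r. mm m (c k) (ths m F k) a) = (\<lambda>_. 0)"
proof -
  obtain B where fB: "finite B" and BM: "B \<subseteq> mons m" and H: "\<forall>\<beta>\<in>mons m. \<exists>q p. mpoly_over m E q \<and> nz m q \<and>
     (\<forall>\<gamma>\<in>B. mpoly_over m E (p \<gamma>)) \<and>
     mm m q (ms_deriv m \<beta> F) = (\<lambda>a. \<Sum>\<gamma>\<in>B. mm m (p \<gamma>) (ms_deriv m \<gamma> F) a)"
    using dfinite_mm[OF df] by blast
  define R where "R = card B"
  have "\<forall>k. \<exists>n (\<beta> :: nat \<Rightarrow> nat \<Rightarrow> nat) (c :: nat \<Rightarrow> nat). (\<forall>j<n. \<beta> j \<in> mons m) \<and>
     (\<forall>a. (of_nat (\<Sum>i<m. a i) :: complex) ^ k = (\<Sum>j<n. of_nat (c j) * (\<Prod>i<m. fall (a i) (\<beta> j i))))"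
    using theta_idx by blast
  hence "\<exists>(n::nat \<Rightarrow> nat) \<beta> c. \<forall>k. (\<forall>j<n k. \<beta> k j \<in> mons m) \<and>
     (\<forall>a. (of_nat (\<Sum>i<m. a i) :: complex) ^ k = (\<Sum>j<n k. of_nat (c k j) * (\<Prod>i<m. fall (a i) (\<beta> k j i))))"
    unfolding choice_iff .
  then obtain n :: "nat \<Rightarrow> nat" and \<beta> c where nbc0: "\<forall>k. (\<forall>j<n k. \<beta> k j \<in> mons m) \<and>
     (\<forall>a. (of_nat (\<Sum>i<m. a i) :: complex) ^ k = (\<Sum>j<n k. of_nat (c k j) * (\<Prod>i<m. fall (a i) (\<beta> k j i))))"
    by blast
  have nbc: "\<And>k. (\<forall>j<n k. \<beta> k j \<in> mons m)"
    "\<And>k. (\<forall>a. (of_nat (\<Sum>i<m. a i) :: complex) ^ k = (\<Sum>j<n k. of_nat (c k j) * (\<Prod>i<m. fall (a i) (\<beta> k j i))))"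
    using nbc0 by blast+
  define S where "S = (\<Union>k\<le>R. \<beta> k ` {..<n k})"
  have fS: "finite S" by (simp add: S_def)
  have SM: "S \<subseteq> mons m" using nbc(1) by (auto simp: S_def)
  obtain D P where D: "mpoly_over m E D" "nz m D" and P: "\<forall>\<beta>\<in>S. \<forall>\<gamma>\<in>B. mpoly_over m E (P \<beta> \<gamma>)"
    and rel: "\<forall>\<beta>\<in>S. mm m D (ms_deriv m \<beta> F) = (\<lambda>a. \<Sum>\<gamma>\<in>B. mm m (P \<beta> \<gamma>) (ms_deriv m \<gamma> F) a)"
  proof -
    have "\<forall>\<beta>\<in>S. \<exists>q p. mpoly_over m E q \<and> nz m q \<and> (\<forall>\<gamma>\<in>B. mpoly_over m E (p \<gamma>)) \<and>
              mm m q (ms_deriv m \<beta> F) = (\<lambda>a. \<Sum>\<gamma>\<in>B. mm m (p \<gamma>) (ms_deriv m \<gamma> F) a)"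
      using H SM by blast
    from common_denom[OF E fS this] show ?thesis using that by blast
  qed
  define Rk where "Rk k \<gamma> = (\<lambda>b. \<Sum>j<n k. of_nat (c k j) * mm m (mmono (\<beta> k j)) (P (\<beta> k j) \<gamma>) b)" for k \<gamma>
  have relk: "\<forall>k\<in>{..R}. mm m D (ths m F k) = (\<lambda>a. \<Sum>\<gamma>\<in>B. mm m (Rk k \<gamma>) (ms_deriv m \<gamma> F) a)"
  proof
    fix k assume k: "k \<in> {..R}"
    have "\<forall>j<n k. mm m D (ms_deriv m (\<beta> k j) F) = (\<lambda>a. \<Sum>\<gamma>\<in>B. mm m (P (\<beta> k j) \<gamma>) (ms_deriv m \<gamma> F) a)"
      using rel k by (auto simp: S_def)
    from theta_rel[OF nbc(1) nbc(2) this]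
    show "mm m D (ths m F k) = (\<lambda>a. \<Sum>\<gamma>\<in>B. mm m (Rk k \<gamma>) (ms_deriv m \<gamma> F) a)"
      unfolding Rk_def .
  qed
  have Rkp: "\<forall>k\<in>{..R}. \<forall>\<gamma>\<in>B. mpoly_over m E (Rk k \<gamma>)"
  proof (intro ballI)
    fix k \<gamma> assume k: "k \<in> {..R}" and \<gamma>: "\<gamma> \<in> B"
    show "mpoly_over m E (Rk k \<gamma>)" unfolding Rk_def
    proof (rule mpoly_sum[OF E])
      fix j assume j: "j \<in> {..<n k}"
      have "\<beta> k j \<in> S" using k j by (auto simp: S_def)
      thus "mpoly_over m E (\<lambda>b. of_nat (c k j) * mm m (mmono (\<beta> k j)) (P (\<beta> k j) \<gamma>) b)"
        using P \<gamma> by (intro mpoly_scal[OF E] sf_of_nat[OF E] mpoly_mm[OF E] mpoly_mono[OF E]) auto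
    qed
  qed
  have cardI: "card B < card {..R}" by (simp add: R_def)
  have "\<exists>cc. (\<forall>i\<in>{..R}. mpoly_over m E (cc i)) \<and> (\<exists>i\<in>{..R}. nz m (cc i)) \<and>
    (\<lambda>a. \<Sum>i\<in>{..R}. mm m (cc i) (ths m F i) a) = (\<lambda>_. 0)"
    by (rule lin_dep[OF E fB, where I="{..R}" and D="\<lambda>_. D" and m=m and p=Rk and f="ths m F" and b="\<lambda>\<gamma>. ms_deriv m \<gamma> F"])
       (use cardI D Rkp relk in simp_all)
  then obtain cc where cc: "\<forall>i\<in>{..R}. mpoly_over m E (cc i)" "\<exists>i\<in>{..R}. nz m (cc i)"
    "(\<lambda>a. \<Sum>i\<in>{..R}. mm m (cc i) (ths m F i) a) = (\<lambda>_. 0)" by blast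
  define r where "r = Max {i\<in>{..R}. nz m (cc i)}"
  have fin: "finite {i\<in>{..R}. nz m (cc i)}" by simp
  have ne: "{i\<in>{..R}. nz m (cc i)} \<noteq> {}" using cc(2) by blast
  have r_in: "r \<in> {i\<in>{..R}. nz m (cc i)}" unfolding r_def by (rule Max_in[OF fin ne])
  have r_max: "\<And>i. i \<le> R \<Longrightarrow> nz m (cc i) \<Longrightarrow> i \<le> r" unfolding r_def using fin by (intro Max_ge) auto
  have "(\<lambda>a. \<Sum>k\<le>r. mm m (cc k) (ths m F k) a) = (\<lambda>_. 0)"
  proof
    fix a
    have "(\<Sum>k\<le>R. mm m (cc k) (ths m F k) a) = (\<Sum>k\<le>r. mm m (cc k) (ths m F k) a)"
    proof (rule sum.mono_neutral_right)
      show "finite {..R}" by simp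
      show "{..r} \<subseteq> {..R}" using r_in by auto
      show "\<forall>i\<in>{..R} - {..r}. mm m (cc i) (ths m F i) a = 0"
      proof
        fix i assume i: "i \<in> {..R} - {..r}"
        hence "\<not> nz m (cc i)" using r_max by force
        hence "mm m (cc i) (ths m F i) = (\<lambda>_. 0)" by (intro mm_zero_on_left) (auto simp: nz_def)
        thus "mm m (cc i) (ths m F i) a = 0" by simp
      qed
    qed
    thus "(\<Sum>k\<le>r. mm m (cc k) (ths m F k) a) = 0" using fun_cong[OF cc(3), of a] by (simp add: atMost_def)
  qed
  moreover have "\<forall>k\<le>r. mpoly_over m E (cc k)" using cc(1) r_in by auto
  moreover have "nz m (cc r)" using r_in by simp
  ultimately show ?thesis by blast
qed

definition tdeg :: "nat \<Rightarrow> (nat \<Rightarrow> nat) \<Rightarrow> nat" where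
  "tdeg m a = (\<Sum>i<m. a i)"

definition apow :: "nat \<Rightarrow> (nat \<Rightarrow> complex) \<Rightarrow> (nat \<Rightarrow> nat) \<Rightarrow> complex" where
  "apow m \<alpha> a = (\<Prod>i<m. \<alpha> i ^ a i)"

definition Tset :: "nat \<Rightarrow> nat \<Rightarrow> (nat \<Rightarrow> nat) set" where
  "Tset m n = {a\<in>mons m. (\<Sum>i<m. a i) = n}"

definition Uset :: "nat \<Rightarrow> nat \<Rightarrow> ((nat \<Rightarrow> nat) \<times> (nat \<Rightarrow> nat)) set" where
  "Uset m n = {(b, c). b \<in> mons m \<and> c \<in> mons m \<and> tdeg m b + tdeg m c = n}"

lemma finite_Tset [simp]: "finite (Tset m n)"
proof (rule finite_subset[OF _ finite_box[of "\<lambda>_. n" m]])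
  show "Tset m n \<subseteq> {b. (\<forall>i. b i \<le> n) \<and> (\<forall>i\<ge>m. b i = 0)}"
  proof
    fix a assume a: "a \<in> Tset m n"
    have "a i \<le> n" for i
    proof (cases "i < m")
      case True
      hence "a i \<le> (\<Sum>i<m. a i)" by (intro member_le_sum) auto
      thus ?thesis using a by (simp add: Tset_def)
    next
      case False thus ?thesis using a by (simp add: Tset_def mons_def)
    qed
    thus "a \<in> {b. (\<forall>i. b i \<le> n) \<and> (\<forall>i\<ge>m. b i = 0)}" using a by (auto simp: Tset_def mons_def)
  qed
qed

lemma Uset_sub: "Uset m n \<subseteq> (\<Union>j\<le>n. Tset m j) \<times> (\<Union>j\<le>n. Tset m j)"
  by (auto simp: Uset_def Tset_def tdeg_def)

lemma finite_Uset [simp]: "finite (Uset m n)"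
  by (rule finite_subset[OF Uset_sub]) auto

lemma diag_coeff_T: "diag_coeff m f \<alpha> n = (\<Sum>a\<in>Tset m n. f a * apow m \<alpha> a)"
  by (simp add: diag_coeff_def Tset_def apow_def)

lemma apow_add: "apow m \<alpha> (\<lambda>i. b i + c i) = apow m \<alpha> b * apow m \<alpha> c"
  by (simp add: apow_def power_add prod.distrib)

lemma tdeg_add: "tdeg m (\<lambda>i. b i + c i) = tdeg m b + tdeg m c"
  by (simp add: tdeg_def sum.distrib)

lemma diag_mm_U: "diag_coeff m (mm m P f) \<alpha> n = (\<Sum>(b, c)\<in>Uset m n. P b * f c * (apow m \<alpha> b * apow m \<alpha> c))"
proof -
  have "diag_coeff m (mm m P f) \<alpha> n = (\<Sum>a\<in>Tset m n. \<Sum>b\<in>lset m a. P b * f (\<lambda>i. a i - b i) * apow m \<alpha> a)"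
    unfolding diag_coeff_T by (intro sum.cong refl) (simp add: Tset_def mm_apply sum_distrib_right)
  also have "\<dots> = (\<Sum>(a, b)\<in>Sigma (Tset m n) (lset m). P b * f (\<lambda>i. a i - b i) * apow m \<alpha> a)"
    by (rule sum.Sigma) auto
  also have "\<dots> = (\<Sum>(b, c)\<in>Uset m n. P b * f c * (apow m \<alpha> b * apow m \<alpha> c))"
  proof (rule sum.reindex_bij_witness[of _ "\<lambda>(b, c). (\<lambda>i. b i + c i, b)" "\<lambda>(a, b). (b, \<lambda>i. a i - b i)"])
    fix x assume x: "x \<in> Sigma (Tset m n) (lset m)"
    obtain a b where [simp]: "x = (a, b)" by (cases x)
    from x show "(case case x of (a, b) \<Rightarrow> (b, \<lambda>i. a i - b i) of (b, c) \<Rightarrow> (\<lambda>i. b i + c i, b)) = x"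
      by (auto simp: lset_def)
  next
    fix x assume x: "x \<in> Sigma (Tset m n) (lset m)"
    obtain a b where [simp]: "x = (a, b)" by (cases x)
    have ab: "(\<lambda>i. b i + (a i - b i)) = a" using x by (auto simp: lset_def)
    have "tdeg m b + tdeg m (\<lambda>i. a i - b i) = tdeg m a" using tdeg_add[of m b "\<lambda>i. a i - b i"] ab by simp
    with x show "(case x of (a, b) \<Rightarrow> (b, \<lambda>i. a i - b i)) \<in> Uset m n"
      by (auto simp: Uset_def Tset_def tdeg_def lset_def mons_def)
  next
    fix y assume y: "y \<in> Uset m n"
    obtain b c where [simp]: "y = (b, c)" by (cases y)
    show "(case case y of (b, c) \<Rightarrow> (\<lambda>i. b i + c i, b) of (a, b) \<Rightarrow> (b, \<lambda>i. a i - b i)) = y" by auto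
  next
    fix y assume y: "y \<in> Uset m n"
    obtain b c where [simp]: "y = (b, c)" by (cases y)
    from y show "(case y of (b, c) \<Rightarrow> (\<lambda>i. b i + c i, b)) \<in> Sigma (Tset m n) (lset m)"
      using tdeg_add[of m b c] by (auto simp: Uset_def Tset_def tdeg_def lset_def mons_def)
  next
    fix x assume x: "x \<in> Sigma (Tset m n) (lset m)"
    obtain a b where [simp]: "x = (a, b)" by (cases x)
    have ab: "(\<lambda>i. b i + (a i - b i)) = a" using x by (auto simp: lset_def)
    show "(case case x of (a, b) \<Rightarrow> (b, \<lambda>i. a i - b i) of (b, c) \<Rightarrow> P b * f c * (apow m \<alpha> b * apow m \<alpha> c)) =
        (case x of (a, b) \<Rightarrow> P b * f (\<lambda>i. a i - b i) * apow m \<alpha> a)"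
      using apow_add[of m \<alpha> b "\<lambda>i. a i - b i"] ab by simp
  qed
  finally show ?thesis .
qed

lemma diag_mult_U: "fps_nth (diag_fps m P \<alpha> * diag_fps m f \<alpha>) n = (\<Sum>(b, c)\<in>Uset m n. P b * f c * (apow m \<alpha> b * apow m \<alpha> c))"
proof -
  have "fps_nth (diag_fps m P \<alpha> * diag_fps m f \<alpha>) n = (\<Sum>j=0..n. diag_coeff m P \<alpha> j * diag_coeff m f \<alpha> (n - j))"
    by (simp add: fps_mult_nth diag_fps_def)
  also have "\<dots> = (\<Sum>j=0..n. \<Sum>(b, c)\<in>Tset m j \<times> Tset m (n - j). P b * f c * (apow m \<alpha> b * apow m \<alpha> c))"
    unfolding diag_coeff_T by (intro sum.cong refl) (simp add: sum_product sum.cartesian_product algebra_simps)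
  also have "\<dots> = (\<Sum>(j, bc)\<in>Sigma {0..n} (\<lambda>j. Tset m j \<times> Tset m (n - j)). case bc of (b, c) \<Rightarrow> P b * f c * (apow m \<alpha> b * apow m \<alpha> c))"
    by (rule sum.Sigma) auto
  also have "\<dots> = (\<Sum>(b, c)\<in>Uset m n. P b * f c * (apow m \<alpha> b * apow m \<alpha> c))"
  proof (rule sum.reindex_bij_witness[of _ "\<lambda>bc. (tdeg m (fst bc), bc)" snd])
    fix x assume x: "x \<in> Sigma {0..n} (\<lambda>j. Tset m j \<times> Tset m (n - j))"
    thus "(tdeg m (fst (snd x)), snd x) = x" by (auto simp: Tset_def tdeg_def)
    from x show "snd x \<in> Uset m n" by (auto simp: Tset_def Uset_def tdeg_def)
  next
    fix y assume y: "y \<in> Uset m n"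
    thus "snd (tdeg m (fst y), y) = y" by simp
    from y show "(tdeg m (fst y), y) \<in> Sigma {0..n} (\<lambda>j. Tset m j \<times> Tset m (n - j))"
      by (auto simp: Tset_def Uset_def tdeg_def)
  next
    fix x assume x: "x \<in> Sigma {0..n} (\<lambda>j. Tset m j \<times> Tset m (n - j))"
    show "(case snd x of (b, c) \<Rightarrow> P b * f c * (apow m \<alpha> b * apow m \<alpha> c)) =
          (case x of (j, bc) \<Rightarrow> case bc of (b, c) \<Rightarrow> P b * f c * (apow m \<alpha> b * apow m \<alpha> c))"
      by (auto split: prod.splits)
  qed
  finally show ?thesis .
qed

lemma diag_mm: "diag_fps m (mm m P f) \<alpha> = diag_fps m P \<alpha> * diag_fps m f \<alpha>"
  by (rule fps_ext) (simp only: diag_mult_U, simp add: diag_fps_def diag_mm_U)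

lemma diag_sum: "diag_fps m (\<lambda>a. \<Sum>k\<in>K. f k a) \<alpha> = (\<Sum>k\<in>K. diag_fps m (f k) \<alpha>)"
  by (rule fps_ext) (simp add: diag_fps_def diag_coeff_def fps_sum_nth sum_distrib_right sum.swap[of _ K])

lemma diag_zero: "diag_fps m (\<lambda>_. 0) \<alpha> = 0"
  by (rule fps_ext) (simp add: diag_fps_def diag_coeff_def)

lemma diag_ths0: "diag_fps m (ths m F 0) \<alpha> = diag_fps m F \<alpha>"
  by (simp add: ths_def)

lemma diag_ths_Suc: "diag_fps m (ths m F (Suc k)) \<alpha> = fps_X * fps_deriv (diag_fps m (ths m F k) \<alpha>)"
proof (rule fps_ext)
  fix n
  have "fps_nth (diag_fps m (ths m F (Suc k)) \<alpha>) n = of_nat n * fps_nth (diag_fps m (ths m F k) \<alpha>) n"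
    unfolding diag_fps_def fps_nth_Abs_fps diag_coeff_T sum_distrib_left
  proof (intro sum.cong refl)
    fix a assume "a \<in> Tset m n"
    hence "(\<Sum>i<m. a i) = n" by (simp add: Tset_def)
    thus "ths m F (Suc k) a * apow m \<alpha> a = of_nat n * (ths m F k a * apow m \<alpha> a)"
      by (simp add: ths_def del: of_nat_sum)
  qed
  thus "fps_nth (diag_fps m (ths m F (Suc k)) \<alpha>) n = fps_nth (fps_X * fps_deriv (diag_fps m (ths m F k) \<alpha>)) n"
    by (cases n) simp_all
qed

lemma diag_mone: "diag_fps m mone \<alpha> = 1"
proof (rule fps_ext)
  fix n
  have z: "(\<lambda>_. 0) \<in> Tset m 0" by (simp add: Tset_def mons_def)
  have "diag_coeff m mone \<alpha> n = (\<Sum>a\<in>Tset m n. if a = (\<lambda>_. 0) then 1 else 0)"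
    unfolding diag_coeff_T by (intro sum.cong refl) (simp add: mone_def apow_def)
  also have "\<dots> = (if n = 0 then 1 else 0)"
  proof (cases "n = 0")
    case True thus ?thesis using z by (simp add: sum.delta)
  next
    case False
    hence "(\<lambda>_. 0) \<notin> Tset m n" by (simp add: Tset_def)
    thus ?thesis using False by (simp add: sum.delta)
  qed
  finally show "fps_nth (diag_fps m mone \<alpha>) n = fps_nth 1 n" by (simp add: diag_fps_def)
qed

primrec mpow :: "nat \<Rightarrow> ((nat \<Rightarrow> nat) \<Rightarrow> complex) \<Rightarrow> nat \<Rightarrow> (nat \<Rightarrow> nat) \<Rightarrow> complex" where
  "mpow m P 0 = mone"
| "mpow m P (Suc k) = mm m P (mpow m P k)"

lemma diag_mpow: "diag_fps m (mpow m P k) \<alpha> = diag_fps m P \<alpha> ^ k"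
  by (induction k) (simp_all add: diag_mone diag_mm)

lemma mpoly_mpow: "subfield_C E \<Longrightarrow> mpoly_over m E P \<Longrightarrow> mpoly_over m E (mpow m P k)"
  by (induction k) (simp_all add: mpoly_one mpoly_mm)

lemma fsupp_mpow:
  assumes "finite {a\<in>mons m. P a \<noteq> 0}"
  shows "finite {a\<in>mons m. mpow m P k a \<noteq> 0}"
proof (induction k)
  case 0
  have "{a\<in>mons m. mone a \<noteq> 0} \<subseteq> {\<lambda>_. 0}" by (auto simp: mone_def)
  thus ?case by (auto intro: finite_subset)
next
  case (Suc k) thus ?case using assms mm_fsupp[of m P "mpow m P k"] by simp
qed

lemma nz_mpow: "mpoly_over m E P \<Longrightarrow> nz m P \<Longrightarrow> nz m (mpow m P k)"
proof (induction k)
  case 0 thus ?case by (simp add: nz_one)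
next
  case (Suc k)
  have "finite {a\<in>mons m. P a \<noteq> 0}" using Suc.prems by (simp add: mpoly_over_def)
  thus ?case using Suc fsupp_mpow nz_mm[of m P "mpow m P k"] by simp
qed

lemma diag_poly:
  assumes "finite {a\<in>mons m. P a \<noteq> 0}"
  shows "\<exists>q. diag_fps m P \<alpha> = fps_of_poly q"
proof -
  define S where "S = {a\<in>mons m. P a \<noteq> 0}"
  define N where "N = Max (insert 0 (tdeg m ` S))"
  have fS: "finite S" using assms by (simp add: S_def)
  have zero: "diag_coeff m P \<alpha> n = 0" if "n > N" for n
  proof -
    have "P a = 0" if a: "a \<in> Tset m n" for a
    proof (rule ccontr)
      assume "P a \<noteq> 0"
      hence "a \<in> S" using a by (simp add: S_def Tset_def)
      hence "tdeg m a \<le> N" unfolding N_def using fS by (intro Max_ge) auto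
      moreover have "tdeg m a = n" using a by (simp add: Tset_def tdeg_def)
      ultimately show False using \<open>n > N\<close> by simp
    qed
    thus ?thesis unfolding diag_coeff_T by simp
  qed
  define q where "q = Poly (map (diag_coeff m P \<alpha>) [0..<Suc N])"
  have "diag_fps m P \<alpha> = fps_of_poly q"
  proof (rule fps_ext)
    fix n
    show "fps_nth (diag_fps m P \<alpha>) n = fps_nth (fps_of_poly q) n"
    proof (cases "n \<le> N")
      case True thus ?thesis by (simp add: q_def diag_fps_def nth_default_def del: upt_Suc)
    next
      case False thus ?thesis using zero[of n] by (simp add: q_def diag_fps_def nth_default_def del: upt_Suc)
    qed
  qed
  thus ?thesis by blast
qed

definition hom :: "nat \<Rightarrow> ((nat \<Rightarrow> nat) \<Rightarrow> complex) \<Rightarrow> (nat \<Rightarrow> nat) \<Rightarrow> complex" where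
  "hom m P = (\<lambda>a. if a \<in> mons (Suc m) \<and> a m = (\<Sum>i<m. a i) then P (a(m := 0)) else 0)"

lemma ext_mons: "b \<in> mons m \<Longrightarrow> b(m := k) \<in> mons (Suc m)"
  by (auto simp: mons_def)

lemma res_mons: "a \<in> mons (Suc m) \<Longrightarrow> a(m := 0) \<in> mons m"
  by (auto simp: mons_def)

lemma sum_upd_m: "(\<Sum>i<(m::nat). (f(m := k)) i) = (\<Sum>i<m. f i)"
  by (rule sum.cong[OF refl]) simp

lemma bupd: "b m = 0 \<Longrightarrow> b(m := 0) = b"
  by auto

lemma spec_hom:
  "spec_fps m (hom m P) \<alpha> = diag_fps m P \<alpha>"
proof (rule fps_ext)
  fix k
  let ?A = "{a\<in>mons (Suc m). hom m P a \<noteq> 0 \<and> a m = k}"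
  let ?B = "{b\<in>mons m. P b \<noteq> 0 \<and> (\<Sum>i<m. b i) = k}"
  have "fps_nth (spec_fps m (hom m P) \<alpha>) k = (\<Sum>a\<in>?A. hom m P a * (\<Prod>i<m. \<alpha> i ^ a i))"
    by (simp add: spec_fps_def)
  also have "\<dots> = (\<Sum>b\<in>?B. P b * apow m \<alpha> b)"
  proof (rule sum.reindex_bij_witness[of _ "\<lambda>b. b(m := (\<Sum>i<m. b i))" "\<lambda>a. a(m := 0)"])
    fix a assume a: "a \<in> ?A"
    hence c: "a \<in> mons (Suc m)" "a m = (\<Sum>i<m. a i)" "P (a(m := 0)) \<noteq> 0"
      by (auto simp: hom_def split: if_splits)
    show "(a(m := 0))(m := \<Sum>i<m. (a(m := 0)) i) = a" using c(2) by (auto simp: sum_upd_m)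
    show "a(m := 0) \<in> ?B" using c a by (auto simp: res_mons sum_upd_m)
    show "P (a(m := 0)) * apow m \<alpha> (a(m := 0)) = hom m P a * (\<Prod>i<m. \<alpha> i ^ a i)"
      using c by (auto simp: hom_def apow_def intro!: prod.cong)
  next
    fix b assume b: "b \<in> ?B"
    have bm: "b m = 0" using b by (simp add: mons_def)
    show "(b(m := \<Sum>i<m. b i))(m := 0) = b" using bm by auto
    show "b(m := \<Sum>i<m. b i) \<in> ?A"
      using b bm ext_mons[of b m] by (auto simp: hom_def sum_upd_m bupd)
  qed
  also have "\<dots> = (\<Sum>b\<in>Tset m k. P b * apow m \<alpha> b)"
    by (rule sum.mono_neutral_left) (use finite_Tset[of m k] in \<open>auto simp: Tset_def\<close>)
  also have "\<dots> = fps_nth (diag_fps m P \<alpha>) k"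
    by (simp add: diag_fps_def diag_coeff_T)
  finally show "fps_nth (spec_fps m (hom m P) \<alpha>) k = fps_nth (diag_fps m P \<alpha>) k" .
qed

lemma mpoly_hom:
  assumes E: "subfield_C E" and P: "mpoly_over m E P"
  shows "mpoly_over (Suc m) E (hom m P)"
proof -
  have vals: "\<forall>a\<in>mons (Suc m). hom m P a \<in> E"
    using P sf_0[OF E] res_mons by (auto simp: hom_def mpoly_over_def)
  have "{a\<in>mons (Suc m). hom m P a \<noteq> 0} \<subseteq> (\<lambda>b. b(m := (\<Sum>i<m. b i))) ` {b\<in>mons m. P b \<noteq> 0}"
  proof
    fix a assume a: "a \<in> {a\<in>mons (Suc m). hom m P a \<noteq> 0}"
    hence c: "a \<in> mons (Suc m)" "a m = (\<Sum>i<m. a i)" "P (a(m := 0)) \<noteq> 0"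
      by (auto simp: hom_def split: if_splits)
    have "a = (a(m := 0))(m := \<Sum>i<m. (a(m := 0)) i)" using c(2) by (auto simp: sum_upd_m)
    thus "a \<in> (\<lambda>b. b(m := (\<Sum>i<m. b i))) ` {b\<in>mons m. P b \<noteq> 0}"
      using c res_mons by blast
  qed
  moreover have "finite {b\<in>mons m. P b \<noteq> 0}" using P by (simp add: mpoly_over_def)
  ultimately have "finite {a\<in>mons (Suc m). hom m P a \<noteq> 0}" by (auto intro: finite_subset)
  thus ?thesis using vals by (simp add: mpoly_over_def)
qed

lemma nz_hom:
  assumes "nz m P" shows "\<exists>a\<in>mons (Suc m). hom m P a \<noteq> 0"
proof -
  obtain b where b: "b \<in> mons m" "P b \<noteq> 0" using assms by (auto simp: nz_def)
  have bm: "b m = 0" using b by (simp add: mons_def)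
  have "hom m P (b(m := \<Sum>i<m. b i)) = P b"
    using b bm ext_mons[of b m] by (auto simp: hom_def sum_upd_m bupd)
  thus ?thesis using b ext_mons[of b m] by (intro bexI[of _ "b(m := \<Sum>i<m. b i)"]) auto
qed

lemma diag_ths_fth: "diag_fps m (ths m F k) \<alpha> = (fth ^^ k) (diag_fps m F \<alpha>)"
  by (induction k) (simp_all add: diag_ths0 diag_ths_Suc fth_def)

theorem lemma3p4:
  fixes m :: nat and E :: "complex set" and F :: "(nat \<Rightarrow> nat) \<Rightarrow> complex"
    and C1 C2 :: real
  assumes "subfield_C E"
    and "mseries_over m E F"
    and "dfinite m E F"
    and "C1 > 0" and "C2 > 0"
    and "\<forall>\<alpha>. on_torus m \<alpha> \<longrightarrow> (\<forall>n\<ge>1. norm (diag_coeff m F \<alpha> n) \<le> C1 * real n powr C2)"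
  shows "\<exists>W. mpoly_over (Suc m) E W \<and> (\<exists>a\<in>mons (Suc m). W a \<noteq> 0) \<and>
           (\<forall>\<alpha>. on_torus m \<alpha> \<and> is_rational_fps (diag_fps m F \<alpha>) \<longrightarrow>
              conv_radius (fps_nth (spec_fps m W \<alpha> * diag_fps m F \<alpha>)) > 1)"
proof -
  note E = assms(1)
  obtain r c where cp: "\<forall>k\<le>r. mpoly_over m E (c k)" and cnz: "nz m (c r)"
    and ode: "(\<lambda>a. \<Sum>k\<le>r. mm m (c k) (ths m F k) a) = (\<lambda>_. 0)"
    using mv_ode[OF E assms(3)] by blast
  define K where "K = Suc (nat \<lceil>C2\<rceil>)"
  define W where "W = hom m (mpow m (c r) K)"
  have cr: "mpoly_over m E (c r)" using cp by simp
  have Wp: "mpoly_over (Suc m) E W" unfolding W_def by (intro mpoly_hom[OF E] mpoly_mpow[OF E cr])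
  have Wnz: "\<exists>a\<in>mons (Suc m). W a \<noteq> 0" unfolding W_def by (intro nz_hom nz_mpow[OF cr cnz])
  have main: "conv_radius (fps_nth (spec_fps m W \<alpha> * diag_fps m F \<alpha>)) > 1"
    if tor: "on_torus m \<alpha>" and rat: "is_rational_fps (diag_fps m F \<alpha>)" for \<alpha>
  proof -
    define g where "g = diag_fps m F \<alpha>"
    have "\<forall>k\<in>{..r}. \<exists>q. diag_fps m (c k) \<alpha> = fps_of_poly q"
      using cp by (intro ballI diag_poly) (auto simp: mpoly_over_def)
    then obtain Q where Q: "\<And>k. k \<in> {..r} \<Longrightarrow> diag_fps m (c k) \<alpha> = fps_of_poly (Q k)"
      by metis
    have "0 = diag_fps m (\<lambda>a. \<Sum>k\<le>r. mm m (c k) (ths m F k) a) \<alpha>"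
      unfolding ode by (simp add: diag_zero)
    also have "\<dots> = (\<Sum>k\<le>r. fps_of_poly (Q k) * (fth ^^ k) g)"
      unfolding diag_sum by (intro sum.cong refl) (simp add: diag_mm Q diag_ths_fth g_def)
    finally have ode1: "(\<Sum>k\<le>r. fps_of_poly (Q k) * (fth ^^ k) g) = 0" by simp
    have spec: "spec_fps m W \<alpha> = fps_of_poly (Q r) ^ K"
      unfolding W_def spec_hom diag_mpow using Q[of r] by simp
    show ?thesis
    proof (cases "Q r = 0")
      case True
      have z: "spec_fps m W \<alpha> * diag_fps m F \<alpha> = 0" unfolding spec True by (simp add: K_def)
      have "fps_nth (spec_fps m W \<alpha> * diag_fps m F \<alpha>) = (\<lambda>_. 0)"
        by (rule ext) (simp only: z fps_zero_nth)
      thus ?thesis by simp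
    next
      case False
      obtain p q where pq: "q \<noteq> 0" "fps_of_poly q * g = fps_of_poly p"
        using rat unfolding is_rational_fps_def g_def by blast
      have bd: "\<forall>n\<ge>1. norm (fps_nth g n) \<le> C1 * real n powr C2"
        using assms(6) tor by (simp add: g_def diag_fps_def)
      have "conv_radius (fps_nth (fps_of_poly (Q r) ^ Suc (nat \<lceil>C2\<rceil>) * g)) > 1"
        by (rule partU[OF bd _ pq(1) pq(2) ode1 False]) (use assms(4) in simp)
      thus ?thesis unfolding spec K_def g_def .
    qed
  qed
  show ?thesis using Wp Wnz main by blast
qed

end
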